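(* Let $\rho_{ABC}$ be a state on $H_A\otimes H_B\otimes H_C$ with $\dim H_X=d_X$, and for $X\in\{A,B,C\}$ let $\{E^X_{\alpha,k}\}$ be an informationally complete $(N_X,M_X)$ POVM on $H_X$ with parameter $x_X$. Write $K_X=\frac{(d_X-1)(d_X^2+M_X^2x_X)}{d_XM_X(M_X-1)}$. Let $\mu,\nu\in\mathbb{R}$ and $l$ a positive integer. If $\rho_{ABC}=\sum_ip_i\rho^A_i\otimes\rho^B_i\otimes\rho^C_i$ is fully separable, then simultaneously $$\|\mathscr{M}^l_{\mu,\nu}(\rho_{A|BC})\|_{\mathrm{tr}}\le\sqrt{(l\mu^2+K_A)(l\nu^2+K_BK_C)},$$ $$\|\mathscr{M}^l_{\mu,\nu}(\rho_{B|AC})\|_{\mathrm{tr}}\le\sqrt{(l\mu^2+K_B)(l\nu^2+K_AK_C)},$$ $$\|\mathscr{M}^l_{\mu,\nu}(\rho_{C|AB})\|_{\mathrm{tr}}\le\sqrt{(l\mu^2+K_C)(l\nu^2+K_AK_B)}.$$ Consequently, if $\rho_{ABC}$ violates any one of these inequalities, it is not fully separable.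
   Context: An $(N,M)$ POVM on $\mathbb{C}^d$ ($M\ge2$) consists of $N$ POVMs $\{E_{\alpha,k}\mid k=1,\dots,M\}$ satisfying $\mathrm{tr}(E_{\alpha,k})=d/M$, $\mathrm{tr}(E_{\alpha,k}^2)=x$, $\mathrm{tr}(E_{\alpha,k}E_{\alpha,l})=\frac{d-Mx}{M(M-1)}$ ($l\ne k$), $\mathrm{tr}(E_{\alpha,k}E_{\beta,l})=d/M^2$ ($\beta\ne\alpha$), where $\frac{d}{M^2}<x\le\min\{\frac{d^2}{M^2},\frac dM\}$; informationally complete means $N(M-1)=d^2-1$. Fully separable: a convex combination ($p_i\ge0$, $\sum p_i=1$) of tensor products of local density matrices. For the bipartition $X|YZ$ (where $\{X,Y,Z\}=\{A,B,C\}$): let $\rho_X$ and $\rho_{YZ}$ be the reduced states; $\tau_X$ is the column vector with entries $\mathrm{tr}(E^X_{\alpha,k}\rho_X)$; $\sigma_{YZ}$ is the column vector with entries $\mathrm{tr}[(E^Y_{\beta,j}\otimes E^Z_{\gamma,n})\rho_{YZ}]$ indexed by $(\beta,j,\gamma,n)$; $\mathcal{P}(\rho_{X|YZ})$ is the matrix with entries $\mathrm{tr}[(E^X_{\alpha,k}\otimes E^Y_{\beta,j}\otimes E^Z_{\gamma,n})\rho_{ABC}]$ (tensor factors placed in the order of the actual subsystems) with row index $(\alpha,k)$ and column index $(\beta,j,\gamma,n)$, all indices in lexicographic order. Then $$\mathscr{M}^l_{\mu,\nu}(\rho_{X|YZ})=\begin{pmatrix}\mu\nu J_{l\times l}&\mu\,\omega_l(\sigma_{YZ})^T\\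 \nu\,\omega_l(\tau_X)&\mathcal{P}(\rho_{X|YZ})\end{pmatrix},$$ where $J_{l\times l}$ is the $l\times l$ all-ones matrix and $\omega_l(V)=(V,\dots,V)$ is the matrix with $l$ columns equal to the column vector $V$. $\|G\|_{\mathrm{tr}}=\mathrm{tr}\sqrt{G^\dagger G}$. *)

theory Defs
  imports "Jordan_Normal_Form.Schur_Decomposition"
begin

definition trace_mat :: "complex mat \<Rightarrow> complex" where
  "trace_mat A = (\<Sum>i<dim_row A. A $$ (i, i))"

definition hermitian_mat :: "complex mat \<Rightarrow> bool" where
  "hermitian_mat A \<longleftrightarrow> mat_adjoint A = A"

text \<open>Positive semidefinite n x n matrix (complex order: 0 \<le> z iff z real and nonnegative).\<close>
definition psd_mat :: "nat \<Rightarrow> complex mat \<Rightarrow> bool" where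
  "psd_mat n A \<longleftrightarrow> A \<in> carrier_mat n n \<and> hermitian_mat A \<and>
     (\<forall>v \<in> carrier_vec n. 0 \<le> conjugate v \<bullet> (A *\<^sub>v v))"

definition density_mat :: "nat \<Rightarrow> complex mat \<Rightarrow> bool" where
  "density_mat d \<rho> \<longleftrightarrow> psd_mat d \<rho> \<and> trace_mat \<rho> = 1"

definition psd_sqrt :: "complex mat \<Rightarrow> complex mat" where
  "psd_sqrt A = (THE S. psd_mat (dim_row A) S \<and> S * S = A)"

definition trace_norm :: "complex mat \<Rightarrow> real" where
  "trace_norm G = Re (trace_mat (psd_sqrt (mat_adjoint G * G)))"

text \<open>Kronecker (tensor) product; index i of A\<otimes>B corresponds to pair (i div rows B, i mod rows B).\<close>
definition kron :: "complex mat \<Rightarrow> complex mat \<Rightarrow> complex mat" where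
  "kron A B = mat (dim_row A * dim_row B) (dim_col A * dim_col B)
     (\<lambda>(i, j). A $$ (i div dim_row B, j div dim_col B) * B $$ (i mod dim_row B, j mod dim_col B))"

text \<open>Partial trace over the middle factor of C^d1 \<otimes> C^d2 \<otimes> C^d3.\<close>
definition ptrace_mid :: "nat \<Rightarrow> nat \<Rightarrow> nat \<Rightarrow> complex mat \<Rightarrow> complex mat" where
  "ptrace_mid d1 d2 d3 \<rho> = mat (d1 * d3) (d1 * d3)
     (\<lambda>(i, j). \<Sum>k<d2. \<rho> $$ (((i div d3) * d2 + k) * d3 + i mod d3,
                                ((j div d3) * d2 + k) * d3 + j mod d3))"

definition ptrace_first :: "nat \<Rightarrow> nat \<Rightarrow> complex mat \<Rightarrow> complex mat" where
  "ptrace_first d1 d2 \<rho> = ptrace_mid 1 d1 d2 \<rho>"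

definition ptrace_second :: "nat \<Rightarrow> nat \<Rightarrow> complex mat \<Rightarrow> complex mat" where
  "ptrace_second d1 d2 \<rho> = ptrace_mid d1 d2 1 \<rho>"

text \<open>E \<alpha> k for \<alpha> < N, k < M (0-based indices) is an (N,M) POVM on C^d with parameter x.\<close>
definition NM_POVM :: "nat \<Rightarrow> nat \<Rightarrow> nat \<Rightarrow> real \<Rightarrow> (nat \<Rightarrow> nat \<Rightarrow> complex mat) \<Rightarrow> bool" where
  "NM_POVM d N M x E \<longleftrightarrow>
     M \<ge> 2 \<and>
     real d / real M ^ 2 < x \<and> x \<le> min (real d ^ 2 / real M ^ 2) (real d / real M) \<and>
     (\<forall>\<alpha><N. \<forall>k<M. psd_mat d (E \<alpha> k)) \<and>
     (\<forall>\<alpha><N. \<forall>i<d. \<forall>j<d. (\<Sum>k<M. E \<alpha> k $$ (i, j)) = 1\<^sub>m d $$ (i, j)) \<and>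
     (\<forall>\<alpha><N. \<forall>k<M. trace_mat (E \<alpha> k) = of_real (real d / real M)) \<and>
     (\<forall>\<alpha><N. \<forall>k<M. trace_mat (E \<alpha> k * E \<alpha> k) = of_real x) \<and>
     (\<forall>\<alpha><N. \<forall>k<M. \<forall>l<M. l \<noteq> k \<longrightarrow>
        trace_mat (E \<alpha> k * E \<alpha> l) = of_real ((real d - real M * x) / (real M * (real M - 1)))) \<and>
     (\<forall>\<alpha><N. \<forall>\<beta><N. \<forall>k<M. \<forall>l<M. \<beta> \<noteq> \<alpha> \<longrightarrow>
        trace_mat (E \<alpha> k * E \<beta> l) = of_real (real d / real M ^ 2))"

definition IC_NM_POVM :: "nat \<Rightarrow> nat \<Rightarrow> nat \<Rightarrow> real \<Rightarrow> (nat \<Rightarrow> nat \<Rightarrow> complex mat) \<Rightarrow> bool" where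
  "IC_NM_POVM d N M x E \<longleftrightarrow> NM_POVM d N M x E \<and> N * (M - 1) = d ^ 2 - 1"

definition K_const :: "nat \<Rightarrow> nat \<Rightarrow> real \<Rightarrow> real" where
  "K_const d M x = (real d - 1) * (real d ^ 2 + real M ^ 2 * x) / (real d * real M * (real M - 1))"

definition fully_separable :: "nat \<Rightarrow> nat \<Rightarrow> nat \<Rightarrow> complex mat \<Rightarrow> bool" where
  "fully_separable dA dB dC \<rho> \<longleftrightarrow>
     (\<exists>(n::nat) (p::nat \<Rightarrow> real) \<rho>A \<rho>B \<rho>C.
        (\<forall>i<n. 0 \<le> p i) \<and> (\<Sum>i<n. p i) = 1 \<and>
        (\<forall>i<n. density_mat dA (\<rho>A i) \<and> density_mat dB (\<rho>B i) \<and> density_mat dC (\<rho>C i)) \<and>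
        \<rho> \<in> carrier_mat (dA * dB * dC) (dA * dB * dC) \<and>
        (\<forall>r < dA * dB * dC. \<forall>c < dA * dB * dC.
           \<rho> $$ (r, c) = (\<Sum>i<n. complex_of_real (p i) * kron (kron (\<rho>A i) (\<rho>B i)) (\<rho>C i) $$ (r, c))))"

text \<open>tau_X: entries tr(E_{\<alpha>,k} \<rho>_X), row index (\<alpha>,k) lexicographic.\<close>
definition tau_vec :: "nat \<Rightarrow> nat \<Rightarrow> (nat \<Rightarrow> nat \<Rightarrow> complex mat) \<Rightarrow> complex mat \<Rightarrow> complex vec" where
  "tau_vec N M E \<rho>X = vec (N * M) (\<lambda>r. trace_mat (E (r div M) (r mod M) * \<rho>X))"

text \<open>sigma_YZ: entries tr((E^Y_{\<beta>,j} \<otimes> E^Z_{\<gamma>,n}) \<rho>_YZ), index (\<beta>,j,\<gamma>,n) lexicographic.\<close>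
definition sigma_vec :: "nat \<Rightarrow> nat \<Rightarrow> (nat \<Rightarrow> nat \<Rightarrow> complex mat) \<Rightarrow>
    nat \<Rightarrow> nat \<Rightarrow> (nat \<Rightarrow> nat \<Rightarrow> complex mat) \<Rightarrow> complex mat \<Rightarrow> complex vec" where
  "sigma_vec N1 M1 E1 N2 M2 E2 \<rho>12 = vec (N1 * M1 * N2 * M2) (\<lambda>c.
     let \<beta> = c div (M1 * N2 * M2); j = (c div (N2 * M2)) mod M1;
         \<gamma> = (c div M2) mod N2; n = c mod M2
     in trace_mat (kron (E1 \<beta> j) (E2 \<gamma> n) * \<rho>12))"

definition prob3 :: "(nat \<Rightarrow> nat \<Rightarrow> complex mat) \<Rightarrow> (nat \<Rightarrow> nat \<Rightarrow> complex mat) \<Rightarrow>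
    (nat \<Rightarrow> nat \<Rightarrow> complex mat) \<Rightarrow> complex mat \<Rightarrow> nat \<Rightarrow> nat \<Rightarrow> nat \<Rightarrow> nat \<Rightarrow> nat \<Rightarrow> nat \<Rightarrow> complex" where
  "prob3 EA EB EC \<rho> \<alpha> k \<beta> j \<gamma> n = trace_mat (kron (kron (EA \<alpha> k) (EB \<beta> j)) (EC \<gamma> n) * \<rho>)"

text \<open>Generic correlation matrix: entry f (\<alpha>,k) (\<beta>,j,\<gamma>,n) with rows (\<alpha>,k), columns (\<beta>,j,\<gamma>,n).\<close>
definition corr_mat :: "nat \<Rightarrow> nat \<Rightarrow> nat \<Rightarrow> nat \<Rightarrow> nat \<Rightarrow> nat \<Rightarrow>
    (nat \<Rightarrow> nat \<Rightarrow> nat \<Rightarrow> nat \<Rightarrow> nat \<Rightarrow> nat \<Rightarrow> complex) \<Rightarrow> complex mat" where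
  "corr_mat NX MX NY MY NZ MZ f = mat (NX * MX) (NY * MY * NZ * MZ) (\<lambda>(r, c).
     f (r div MX) (r mod MX)
       (c div (MY * NZ * MZ)) ((c div (NZ * MZ)) mod MY) ((c div MZ) mod NZ) (c mod MZ))"

definition P_A_BC where
  "P_A_BC NA MA EA NB MB EB NC MC EC \<rho> =
     corr_mat NA MA NB MB NC MC (\<lambda>\<alpha> k \<beta> j \<gamma> n. prob3 EA EB EC \<rho> \<alpha> k \<beta> j \<gamma> n)"

definition P_B_AC where
  "P_B_AC NA MA EA NB MB EB NC MC EC \<rho> =
     corr_mat NB MB NA MA NC MC (\<lambda>\<beta> j \<alpha> k \<gamma> n. prob3 EA EB EC \<rho> \<alpha> k \<beta> j \<gamma> n)"

definition P_C_AB where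
  "P_C_AB NA MA EA NB MB EB NC MC EC \<rho> =
     corr_mat NC MC NA MA NB MB (\<lambda>\<gamma> n \<alpha> k \<beta> j. prob3 EA EB EC \<rho> \<alpha> k \<beta> j \<gamma> n)"

definition omega :: "nat \<Rightarrow> complex vec \<Rightarrow> complex mat" where
  "omega l V = mat (dim_vec V) l (\<lambda>(i, j). V $ i)"

definition ones_mat :: "nat \<Rightarrow> complex mat" where
  "ones_mat l = mat l l (\<lambda>_. 1)"

definition script_M :: "nat \<Rightarrow> real \<Rightarrow> real \<Rightarrow> complex vec \<Rightarrow> complex vec \<Rightarrow> complex mat \<Rightarrow> complex mat" where
  "script_M l \<mu> \<nu> \<tau> \<sigma> P = four_block_mat
     (complex_of_real (\<mu> * \<nu>) \<cdot>\<^sub>m ones_mat l)  (complex_of_real \<mu> \<cdot>\<^sub>m transpose_mat (omega l \<sigma>))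
     (complex_of_real \<nu> \<cdot>\<^sub>m omega l \<tau>)           P"

end

theory Submission
  imports Defs "Jordan_Normal_Form.Spectral_Radius"
begin


lemma adj_dim[simp]: "dim_row (mat_adjoint A) = dim_col A" "dim_col (mat_adjoint A) = dim_row A"
  unfolding mat_adjoint_def mat_of_rows_def by simp_all

lemma adj_index[simp]: "i < dim_col A \<Longrightarrow> j < dim_row A \<Longrightarrow> mat_adjoint A $$ (i,j) = cnj (A $$ (j,i))"
  unfolding mat_adjoint_def mat_of_rows_def by simp

lemma adj_carrier[simp]: "A \<in> carrier_mat m n \<Longrightarrow> mat_adjoint A \<in> carrier_mat n m"
  unfolding carrier_mat_def by simp

lemma mult_entry: assumes "A \<in> carrier_mat m k" "B \<in> carrier_mat k n" "i < m" "j < n"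
  shows "(A * B) $$ (i,j) = (\<Sum>l<k. A $$ (i,l) * B $$ (l,j))"
proof -
  have "(A * B) $$ (i,j) = row A i \<bullet> col B j" using assms by simp
  also have "\<dots> = (\<Sum>l<k. row A i $ l * col B j $ l)" 
    unfolding scalar_prod_def using assms by (simp add: atLeast0LessThan)
  also have "\<dots> = (\<Sum>l<k. A $$ (i,l) * B $$ (l,j))"
    by (rule sum.cong, simp, insert assms, simp)
  finally show ?thesis .
qed

lemma mult_vec_entry: assumes "A \<in> carrier_mat m k" "v \<in> carrier_vec k" "i < m"
  shows "(A *\<^sub>v v) $ i = (\<Sum>l<k. A $$ (i,l) * v $ l)"
proof -
  have "(A *\<^sub>v v) $ i = row A i \<bullet> v" using assms by simp
  also have "\<dots> = (\<Sum>l<k. row A i $ l * v $ l)" 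
    unfolding scalar_prod_def using assms by (simp add: atLeast0LessThan)
  also have "\<dots> = (\<Sum>l<k. A $$ (i,l) * v $ l)"
    by (rule sum.cong, simp, insert assms, simp)
  finally show ?thesis .
qed

lemma cscalar_sum: assumes "w \<in> carrier_vec n" shows "v \<bullet>c w = (\<Sum>i<n. v $ i * cnj (w $ i))"
proof -
  have "v \<bullet>c w = (\<Sum>i<n. v $ i * conjugate w $ i)" 
    unfolding scalar_prod_def using assms by (simp add: atLeast0LessThan)
  also have "\<dots> = (\<Sum>i<n. v $ i * cnj (w $ i))"
    by (rule sum.cong, simp, insert assms, simp)
  finally show ?thesis .
qed


lemma adj_mult: fixes A B :: "complex mat" assumes A: "A \<in> carrier_mat m k" and B: "B \<in> carrier_mat k n"
  shows "mat_adjoint (A * B) = mat_adjoint B * mat_adjoint A"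
proof (rule eq_matI)
  fix i j assume i: "i < dim_row (mat_adjoint B * mat_adjoint A)" and j: "j < dim_col (mat_adjoint B * mat_adjoint A)"
  hence i': "i < n" and j': "j < m" using A B by auto
  have "mat_adjoint (A * B) $$ (i,j) = cnj ((A*B) $$ (j,i))" using i' j' A B by simp
  also have "\<dots> = cnj (\<Sum>l<k. A $$ (j,l) * B $$ (l,i))" using mult_entry[OF A B j' i'] by simp
  also have "\<dots> = (\<Sum>l<k. mat_adjoint B $$ (i,l) * mat_adjoint A $$ (l,j))"
    unfolding cnj_sum by (rule sum.cong, simp, insert A B i' j', simp add: mult.commute)
  also have "\<dots> = (mat_adjoint B * mat_adjoint A) $$ (i,j)"
    by (rule mult_entry[symmetric, OF adj_carrier[OF B] adj_carrier[OF A] i' j'])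
  finally show "mat_adjoint (A * B) $$ (i, j) = (mat_adjoint B * mat_adjoint A) $$ (i, j)" .
qed (insert A B, auto)

lemma adj_adj[simp]: "mat_adjoint (mat_adjoint (A :: complex mat)) = A"
  by (rule eq_matI, simp_all)

lemma hermitian_entry: assumes "hermitian_mat A" "A \<in> carrier_mat n n" "i < n" "j < n"
  shows "A $$ (j,i) = cnj (A $$ (i,j))"
proof -
  have "A $$ (j,i) = mat_adjoint A $$ (j,i)" using assms(1) unfolding hermitian_mat_def by simp
  also have "\<dots> = cnj (A $$ (i,j))" using assms by simp
  finally show ?thesis .
qed

lemma hermitianI: assumes A: "A \<in> carrier_mat n n" and h: "\<And>i j. i < n \<Longrightarrow> j < n \<Longrightarrow> A $$ (j,i) = cnj (A $$ (i,j))"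
  shows "hermitian_mat A"
  unfolding hermitian_mat_def
proof (rule eq_matI)
  fix i j assume "i < dim_row A" "j < dim_col A"
  with A have "i < n" "j < n" by auto
  thus "mat_adjoint A $$ (i, j) = A $$ (i, j)" using A h[of j i] by simp
qed (insert A, auto)

definition dmat :: "nat \<Rightarrow> (nat \<Rightarrow> complex) \<Rightarrow> complex mat" where
  "dmat n f = mat n n (\<lambda>(i,j). if i = j then f i else 0)"

lemma dmat_carrier[simp]: "dmat n f \<in> carrier_mat n n" by (simp add: dmat_def)
lemma dmat_dim[simp]: "dim_row (dmat n f) = n" "dim_col (dmat n f) = n" by (simp_all add: dmat_def)

lemma mult_dmat_right: assumes A: "A \<in> carrier_mat m n" and i: "i < m" and j: "j < n"
  shows "(A * dmat n f) $$ (i,j) = A $$ (i,j) * f j"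
proof -
  have "(A * dmat n f) $$ (i,j) = (\<Sum>l<n. A $$ (i,l) * dmat n f $$ (l,j))" by (rule mult_entry[OF A dmat_carrier i j])
  also have "\<dots> = (\<Sum>l<n. if l = j then A $$ (i,j) * f j else 0)"
    by (rule sum.cong, simp, simp add: dmat_def j)
  also have "\<dots> = A $$ (i,j) * f j" using j by simp
  finally show ?thesis .
qed

lemma mult_dmat_left: assumes A: "A \<in> carrier_mat n m" and i: "i < n" and j: "j < m"
  shows "(dmat n f * A) $$ (i,j) = f i * A $$ (i,j)"
proof -
  have "(dmat n f * A) $$ (i,j) = (\<Sum>l<n. dmat n f $$ (i,l) * A $$ (l,j))" by (rule mult_entry[OF dmat_carrier A i j])
  also have "\<dots> = (\<Sum>l<n. if l = i then f i * A $$ (i,j) else 0)"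
    by (rule sum.cong, simp, simp add: dmat_def i)
  also have "\<dots> = f i * A $$ (i,j)" using i by simp
  finally show ?thesis .
qed


lemma complex_nonneg_real: "0 \<le> (z::complex) \<Longrightarrow> z = complex_of_real (Re z) \<and> Re z \<ge> 0"
  by (simp add: less_eq_complex_def complex_eq_iff)

lemma unit_basis: assumes v: "v \<in> carrier_vec n" and v0: "v \<noteq> 0\<^sub>v n"
  shows "\<exists>W r. W \<in> carrier_mat n n \<and> mat_adjoint W * W = 1\<^sub>m n \<and> W * mat_adjoint W = 1\<^sub>m n
     \<and> r > 0 \<and> (\<forall>i<n. W $$ (i,0) = v $ i / complex_of_real r)"
proof -
  interpret cof_vec_space n "TYPE(complex)" .
  from basis_completion[OF v v0]
  have b: "set (basis_completion v) \<subseteq> carrier_vec n" and dist: "distinct (basis_completion v)"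
    and indep: "\<not> lin_dep (set (basis_completion v))" and len: "length (basis_completion v) = n"
    and hd: "hd (basis_completion v) = v" by auto
  define b where "b = basis_completion v"
  define ws where "ws = gram_schmidt n b"
  from gram_schmidt_result[OF b[folded b_def] dist[folded b_def] indep[folded b_def] ws_def]
  have ws: "set ws \<subseteq> carrier_vec n" "corthogonal ws" "length ws = n" using len b_def by auto
  have n0: "n \<noteq> 0" using v v0 by (auto intro!: eq_vecI)
  then obtain vs where bv: "b = v # vs" using len hd unfolding b_def by (cases "basis_completion v", auto)
  have ws0: "ws ! 0 = v" using gram_schmidt_hd[OF v, of vs] n0 ws(3) unfolding ws_def bv
    by (metis hd_conv_nth list.size(3))
  define nr where "nr j = sqrt (Re (ws ! j \<bullet>c ws ! j))" for j
  have wsc: "ws ! j \<in> carrier_vec n" if "j < n" for j using ws that by auto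
  have sq: "ws ! j \<bullet>c ws ! j = complex_of_real ((nr j)^2) \<and> nr j > 0" if j: "j < n" for j
  proof -
    have ge: "0 \<le> ws ! j \<bullet>c ws ! j" by (rule conjugate_square_ge_0_vec)
    have ne: "ws ! j \<bullet>c ws ! j \<noteq> 0" using corthogonalD[OF ws(2), of j j] j ws(3) by auto
    from complex_nonneg_real[OF ge] ne have "Re (ws ! j \<bullet>c ws ! j) > 0"
      by (metis less_eq_real_def of_real_0)
    thus ?thesis using complex_nonneg_real[OF ge] unfolding nr_def by simp
  qed
  define W where "W = mat n n (\<lambda>(i,j). ws ! j $ i / complex_of_real (nr j))"
  have W: "W \<in> carrier_mat n n" unfolding W_def by simp
  have WW: "mat_adjoint W * W = 1\<^sub>m n"
  proof (rule eq_matI)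
    fix i j assume "i < dim_row (1\<^sub>m n :: complex mat)" "j < dim_col (1\<^sub>m n :: complex mat)"
    hence i: "i < n" and j: "j < n" by auto
    have "(mat_adjoint W * W) $$ (i,j) = (\<Sum>k<n. mat_adjoint W $$ (i,k) * W $$ (k,j))"
      by (rule mult_entry[OF adj_carrier[OF W] W i j])
    also have "\<dots> = (\<Sum>k<n. ws ! j $ k * cnj (ws ! i $ k)) / (complex_of_real (nr i) * complex_of_real (nr j))"
      unfolding sum_divide_distrib
      by (rule sum.cong, simp, insert i j W, simp add: W_def field_simps)
    also have "\<dots> = (ws ! j \<bullet>c ws ! i) / (complex_of_real (nr i) * complex_of_real (nr j))"
      using cscalar_sum[OF wsc[OF i]] by simp
    also have "\<dots> = 1\<^sub>m n $$ (i,j)"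
    proof (cases "i = j")
      case True
      thus ?thesis using sq[OF i] i by (simp add: power2_eq_square)
    next
      case False
      thus ?thesis using corthogonalD[OF ws(2), of j i] i j ws(3) by simp
    qed
    finally show "(mat_adjoint W * W) $$ (i,j) = 1\<^sub>m n $$ (i,j)" .
  qed (insert W, auto)
  have WW2: "W * mat_adjoint W = 1\<^sub>m n"
    by (rule mat_mult_left_right_inverse[OF adj_carrier[OF W] W WW])
  have col0: "\<forall>i<n. W $$ (i,0) = v $ i / complex_of_real (nr 0)"
    using n0 ws0 unfolding W_def by simp
  show ?thesis using W WW WW2 col0 sq[of 0] n0 by blast
qed


lemma sum_lessThan_Suc_shift': "(\<Sum>i<Suc m. f i) = f 0 + (\<Sum>i<m. f (Suc i))"
  by (rule sum.lessThan_Suc_shift)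

lemma spectral: assumes "A \<in> carrier_mat n n" and "hermitian_mat A"
  shows "\<exists>U lam. U \<in> carrier_mat n n \<and> mat_adjoint U * U = 1\<^sub>m n \<and> U * mat_adjoint U = 1\<^sub>m n
     \<and> A * U = U * dmat n (\<lambda>i. complex_of_real (lam i))"
  using assms
proof (induction n arbitrary: A)
  case 0
  show ?case by (rule exI[of _ "1\<^sub>m 0"], rule exI[of _ "\<lambda>_. 0"], insert 0, auto intro!: eq_matI simp: dmat_def)
next
  case (Suc m A)
  let ?n = "Suc m"
  have A: "A \<in> carrier_mat ?n ?n" and hA: "hermitian_mat A" by fact+
  from spectrum_non_empty[OF A] obtain e where "eigenvalue A e" unfolding spectrum_def by auto
  from find_eigenvector[OF A this] obtain v where ev: "eigenvector A v e" by blast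
  hence v: "v \<in> carrier_vec ?n" and v0: "v \<noteq> 0\<^sub>v ?n" and Av: "A *\<^sub>v v = e \<cdot>\<^sub>v v"
    unfolding eigenvector_def using A by auto
  from unit_basis[OF v v0] obtain W r where W: "W \<in> carrier_mat ?n ?n" and WW: "mat_adjoint W * W = 1\<^sub>m ?n"
    and WW2: "W * mat_adjoint W = 1\<^sub>m ?n" and r: "r > 0" and col0: "\<forall>i<?n. W $$ (i,0) = v $ i / complex_of_real r"
    by blast
  have AW0: "(A * W) $$ (k,0) = e * W $$ (k,0)" if k: "k < ?n" for k
  proof -
    have "(A * W) $$ (k,0) = (\<Sum>l<?n. A $$ (k,l) * W $$ (l,0))" by (rule mult_entry[OF A W k], simp)
    also have "\<dots> = (\<Sum>l<?n. A $$ (k,l) * v $ l) / complex_of_real r"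
      unfolding sum_divide_distrib by (rule sum.cong, simp, simp add: col0)
    also have "\<dots> = (A *\<^sub>v v) $ k / complex_of_real r" using mult_vec_entry[OF A v k] by simp
    also have "\<dots> = e * W $$ (k,0)" using Av v k col0 by simp
    finally show ?thesis .
  qed
  define B where "B = mat_adjoint W * (A * W)"
  have AWc: "A * W \<in> carrier_mat ?n ?n" using A W by simp
  have B: "B \<in> carrier_mat ?n ?n" unfolding B_def using A W by (meson adj_carrier mult_carrier_mat)
  have hB: "hermitian_mat B" unfolding hermitian_mat_def B_def
    using adj_mult[OF adj_carrier[OF W] AWc] adj_mult[OF A W] hA[unfolded hermitian_mat_def]
      assoc_mult_mat[OF adj_carrier[OF W] A W] by simp
  have B0: "B $$ (i,0) = (if i = 0 then e else 0)" if i: "i < ?n" for i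
  proof -
    have "B $$ (i,0) = (\<Sum>k<?n. mat_adjoint W $$ (i,k) * (A * W) $$ (k,0))"
      unfolding B_def by (rule mult_entry[OF adj_carrier[OF W] AWc i], simp)
    also have "\<dots> = e * (\<Sum>k<?n. mat_adjoint W $$ (i,k) * W $$ (k,0))"
      unfolding sum_distrib_left by (rule sum.cong, simp, simp add: AW0)
    also have "\<dots> = e * (mat_adjoint W * W) $$ (i,0)"
      using mult_entry[OF adj_carrier[OF W] W i, of 0] by simp
    also have "\<dots> = (if i = 0 then e else 0)" using WW i by simp
    finally show ?thesis .
  qed
  have ereal: "e = complex_of_real (Re e)"
    using hermitian_entry[OF hB B, of 0 0] B0[of 0] by (simp add: complex_eq_iff)
  have B0': "B $$ (0,j) = (if j = 0 then e else 0)" if j: "j < ?n" for j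
    using hermitian_entry[OF hB B, of j 0] B0[OF j] j ereal by (cases "j = 0", auto)
  define C where "C = mat m m (\<lambda>(i,j). B $$ (Suc i, Suc j))"
  have C: "C \<in> carrier_mat m m" unfolding C_def by simp
  have hC: "hermitian_mat C"
    by (rule hermitianI[OF C], unfold C_def, simp, rule hermitian_entry[OF hB B], auto)
  from Suc.IH[OF C hC] obtain V mu where V: "V \<in> carrier_mat m m" and VV: "mat_adjoint V * V = 1\<^sub>m m"
    and CV: "C * V = V * dmat m (\<lambda>i. complex_of_real (mu i))" by blast
  define V' where "V' = mat ?n ?n (\<lambda>(i,j). if i = 0 then (if j = 0 then 1 else 0) else if j = 0 then 0 else V $$ (i - 1, j - 1))"
  have V': "V' \<in> carrier_mat ?n ?n" unfolding V'_def by simp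
  have VV': "mat_adjoint V' * V' = 1\<^sub>m ?n"
  proof (rule eq_matI)
    fix i j assume "i < dim_row (1\<^sub>m ?n :: complex mat)" "j < dim_col (1\<^sub>m ?n :: complex mat)"
    hence i: "i < ?n" and j: "j < ?n" by auto
    have "(mat_adjoint V' * V') $$ (i,j) = (\<Sum>k<?n. mat_adjoint V' $$ (i,k) * V' $$ (k,j))"
      by (rule mult_entry[OF adj_carrier[OF V'] V' i j])
    also have "\<dots> = mat_adjoint V' $$ (i,0) * V' $$ (0,j) + (\<Sum>k<m. mat_adjoint V' $$ (i,Suc k) * V' $$ (Suc k,j))"
      by (rule sum.lessThan_Suc_shift)
    also have "\<dots> = 1\<^sub>m ?n $$ (i,j)"
    proof (cases i)
      case 0
      thus ?thesis using V' j by (simp add: V'_def)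
    next
      case (Suc i')
      note i' = this
      show ?thesis
      proof (cases j)
        case 0
        thus ?thesis using V' i i' by (simp add: V'_def)
      next
        case (Suc j')
        have "(\<Sum>k<m. mat_adjoint V' $$ (i,Suc k) * V' $$ (Suc k,j)) = (\<Sum>k<m. mat_adjoint V $$ (i',k) * V $$ (k,j'))"
          by (rule sum.cong, simp, insert V V' i j i' Suc, simp add: V'_def)
        also have "\<dots> = (mat_adjoint V * V) $$ (i', j')"
          using mult_entry[OF adj_carrier[OF V] V, of i' j'] i j i' Suc by simp
        finally show ?thesis using VV i j i' Suc V' by (simp add: V'_def)
      qed
    qed
    finally show "(mat_adjoint V' * V') $$ (i,j) = 1\<^sub>m ?n $$ (i,j)" .
  qed (insert V', auto)
  have VV'2: "V' * mat_adjoint V' = 1\<^sub>m ?n"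
    by (rule mat_mult_left_right_inverse[OF adj_carrier[OF V'] V' VV'])
  define lam where "lam i = (if i = 0 then Re e else mu (i - 1))" for i
  have BV: "B * V' = V' * dmat ?n (\<lambda>i. complex_of_real (lam i))"
  proof (rule eq_matI)
    fix i j assume "i < dim_row (V' * dmat ?n (\<lambda>i. complex_of_real (lam i)))"
      "j < dim_col (V' * dmat ?n (\<lambda>i. complex_of_real (lam i)))"
    hence i: "i < ?n" and j: "j < ?n" using V' by auto
    have R: "(V' * dmat ?n (\<lambda>i. complex_of_real (lam i))) $$ (i,j) = V' $$ (i,j) * complex_of_real (lam j)"
      by (rule mult_dmat_right[OF V' i j])
    have "(B * V') $$ (i,j) = (\<Sum>k<?n. B $$ (i,k) * V' $$ (k,j))"
      by (rule mult_entry[OF B V' i j])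
    also have "\<dots> = B $$ (i,0) * V' $$ (0,j) + (\<Sum>k<m. B $$ (i,Suc k) * V' $$ (Suc k,j))"
      by (rule sum.lessThan_Suc_shift)
    also have "\<dots> = V' $$ (i,j) * complex_of_real (lam j)"
    proof (cases j)
      case 0
      have "(\<Sum>k<m. B $$ (i,Suc k) * V' $$ (Suc k,j)) = 0"
        by (rule sum.neutral, insert 0, simp add: V'_def)
      thus ?thesis using 0 B0[OF i] i ereal by (simp add: V'_def lam_def)
    next
      case (Suc j')
      note j' = this
      show ?thesis
      proof (cases i)
        case 0
        have "(\<Sum>k<m. B $$ (i,Suc k) * V' $$ (Suc k,j)) = 0"
          by (rule sum.neutral, insert 0 B0', simp)
        thus ?thesis using 0 j' j by (simp add: V'_def)
      next
        case (Suc i')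
        have "(\<Sum>k<m. B $$ (i,Suc k) * V' $$ (Suc k,j)) = (\<Sum>k<m. C $$ (i',k) * V $$ (k,j'))"
          by (rule sum.cong, simp, insert i j Suc j', simp add: V'_def C_def)
        also have "\<dots> = (C * V) $$ (i',j')" using mult_entry[OF C V, of i' j'] i j Suc j' by simp
        also have "\<dots> = V $$ (i',j') * complex_of_real (mu j')"
          unfolding CV using mult_dmat_right[OF V, of i' j'] i j Suc j' by simp
        finally show ?thesis using Suc j' i j by (simp add: V'_def lam_def)
      qed
    qed
    finally show "(B * V') $$ (i,j) = (V' * dmat ?n (\<lambda>i. complex_of_real (lam i))) $$ (i,j)" using R by simp
  qed (insert B V', auto)
  define U where "U = W * V'"
  have U: "U \<in> carrier_mat ?n ?n" unfolding U_def using W V' by simp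
  have adjU: "mat_adjoint U = mat_adjoint V' * mat_adjoint W" unfolding U_def by (rule adj_mult[OF W V'])
  have Wa: "mat_adjoint W \<in> carrier_mat ?n ?n" and Va: "mat_adjoint V' \<in> carrier_mat ?n ?n"
    using W V' by auto
  have UU: "mat_adjoint U * U = 1\<^sub>m ?n"
  proof -
    have "mat_adjoint U * U = (mat_adjoint V' * mat_adjoint W) * (W * V')" using adjU U_def by simp
    also have "\<dots> = mat_adjoint V' * (mat_adjoint W * (W * V'))"
      by (rule assoc_mult_mat[OF Va Wa mult_carrier_mat[OF W V']])
    also have "mat_adjoint W * (W * V') = (mat_adjoint W * W) * V'"
      by (rule assoc_mult_mat[OF Wa W V', symmetric])
    finally show ?thesis using WW VV' V' by simp
  qed
  have UU2: "U * mat_adjoint U = 1\<^sub>m ?n"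
  proof -
    have "U * mat_adjoint U = (W * V') * (mat_adjoint V' * mat_adjoint W)" using adjU U_def by simp
    also have "\<dots> = W * (V' * (mat_adjoint V' * mat_adjoint W))"
      by (rule assoc_mult_mat[OF W V' mult_carrier_mat[OF Va Wa]])
    also have "V' * (mat_adjoint V' * mat_adjoint W) = (V' * mat_adjoint V') * mat_adjoint W"
      by (rule assoc_mult_mat[OF V' Va Wa, symmetric])
    finally show ?thesis using WW2 VV'2 Wa W by simp
  qed
  have AW: "A * W = W * B"
  proof -
    have "W * B = (W * mat_adjoint W) * (A * W)" unfolding B_def
      by (rule assoc_mult_mat[OF W Wa AWc, symmetric])
    thus ?thesis using WW2 A W by simp
  qed
  have "A * U = U * dmat ?n (\<lambda>i. complex_of_real (lam i))"
  proof -
    have "A * U = (A * W) * V'" unfolding U_def by (rule assoc_mult_mat[OF A W V', symmetric])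
    also have "\<dots> = W * (B * V')" unfolding AW by (rule assoc_mult_mat[OF W B V'])
    also have "\<dots> = U * dmat ?n (\<lambda>i. complex_of_real (lam i))" unfolding BV U_def by (rule assoc_mult_mat[OF W V' dmat_carrier, symmetric])
    finally show ?thesis .
  qed
  thus ?case using U UU UU2 by blast
qed


lemma conj_dot': assumes "w \<in> carrier_vec n" "y \<in> carrier_vec n"
  shows "conjugate y \<bullet> w = (\<Sum>i<n. cnj (y $ i) * w $ i)"
proof -
  have "conjugate y \<bullet> w = (\<Sum>i\<in>{0..<n}. conjugate y $ i * w $ i)" unfolding scalar_prod_def using assms by simp
  also have "\<dots> = (\<Sum>i<n. cnj (y $ i) * w $ i)" by (rule sum.cong, insert assms, auto)
  finally show ?thesis .
qed

lemma quad_form: assumes A: "A \<in> carrier_mat n n" and v: "v \<in> carrier_vec n"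
  shows "conjugate v \<bullet> (A *\<^sub>v v) = (\<Sum>i<n. \<Sum>j<n. cnj (v $ i) * A $$ (i,j) * v $ j)"
proof -
  have "conjugate v \<bullet> (A *\<^sub>v v) = (\<Sum>i<n. cnj (v $ i) * (A *\<^sub>v v) $ i)"
    by (rule conj_dot', insert A v, auto)
  also have "\<dots> = (\<Sum>i<n. \<Sum>j<n. cnj (v $ i) * A $$ (i,j) * v $ j)"
    by (rule sum.cong, simp, simp add: mult_vec_entry[OF A v] sum_distrib_left mult.assoc)
  finally show ?thesis .
qed

lemma sum_cnj_mult_self: "(\<Sum>k\<in>K. cnj (f k) * f k) = complex_of_real (\<Sum>k\<in>K. (cmod (f k))^2)"
  unfolding of_real_sum by (rule sum.cong, simp, simp only: complex_norm_square mult.commute)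

lemma complex_of_real_nonneg: "0 \<le> r \<Longrightarrow> 0 \<le> complex_of_real r"
  by (simp add: less_eq_complex_def)

lemma psd_XX: assumes X: "X \<in> carrier_mat m n"
  shows "psd_mat n (mat_adjoint X * X)"
  unfolding psd_mat_def
proof (intro conjI ballI)
  show c: "mat_adjoint X * X \<in> carrier_mat n n" using X by (meson adj_carrier mult_carrier_mat)
  show "hermitian_mat (mat_adjoint X * X)" unfolding hermitian_mat_def
    using adj_mult[OF adj_carrier[OF X] X] by simp
  fix v :: "complex vec" assume v: "v \<in> carrier_vec n"
  have "conjugate v \<bullet> ((mat_adjoint X * X) *\<^sub>v v) = (\<Sum>i<n. \<Sum>j<n. cnj (v $ i) * (mat_adjoint X * X) $$ (i,j) * v $ j)"
    by (rule quad_form[OF c v])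
  also have "\<dots> = (\<Sum>i<n. \<Sum>j<n. \<Sum>k<m. cnj (X $$ (k,i) * v $ i) * (X $$ (k,j) * v $ j))"
    by (rule sum.cong, simp, rule sum.cong, simp, subst mult_entry[OF adj_carrier[OF X] X], simp_all,
        insert X, simp add: sum_distrib_left sum_distrib_right mult_ac)
  also have "\<dots> = (\<Sum>k<m. cnj (\<Sum>i<n. X $$ (k,i) * v $ i) * (\<Sum>j<n. X $$ (k,j) * v $ j))"
    unfolding cnj_sum sum_product
    by (subst sum.swap, rule sum.cong, simp, subst sum.swap, simp)
  also have "\<dots> = complex_of_real (\<Sum>k<m. (cmod (\<Sum>i<n. X $$ (k,i) * v $ i))^2)"
    by (rule sum_cnj_mult_self)
  finally show "0 \<le> conjugate v \<bullet> ((mat_adjoint X * X) *\<^sub>v v)"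
    by (simp only: complex_of_real_nonneg sum_nonneg zero_le_power2)
qed


lemma dmat_mult: "dmat n f * dmat n g = dmat n (\<lambda>i. f i * g i)"
proof (rule eq_matI)
  fix i j assume "i < dim_row (dmat n (\<lambda>i. f i * g i))" "j < dim_col (dmat n (\<lambda>i. f i * g i))"
  hence i: "i < n" and j: "j < n" by auto
  have "(dmat n f * dmat n g) $$ (i,j) = dmat n f $$ (i,j) * g j" by (rule mult_dmat_right[OF dmat_carrier i j])
  thus "(dmat n f * dmat n g) $$ (i,j) = dmat n (\<lambda>i. f i * g i) $$ (i,j)" by (simp add: dmat_def i j)
qed auto

lemma adj_dmat_real: "mat_adjoint (dmat n (\<lambda>i. complex_of_real (f i))) = dmat n (\<lambda>i. complex_of_real (f i))"
  by (rule eq_matI, auto simp: dmat_def)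

lemma mult_col_vec: "A \<in> carrier_mat n k \<Longrightarrow> U \<in> carrier_mat k m \<Longrightarrow> j < m \<Longrightarrow> i < n \<Longrightarrow>
   (A *\<^sub>v col U j) $ i = (A * U) $$ (i,j)"
  by simp

lemma eig_nonneg: assumes A: "psd_mat n A" and U: "U \<in> carrier_mat n n" and UU: "mat_adjoint U * U = 1\<^sub>m n"
  and AU: "A * U = U * dmat n (\<lambda>i. complex_of_real (lam i))" and j: "j < n"
  shows "lam j \<ge> 0"
proof -
  have Ac: "A \<in> carrier_mat n n" using A unfolding psd_mat_def by auto
  have u: "col U j \<in> carrier_vec n" using U col_dim[of U j] by simp
  have "conjugate (col U j) \<bullet> (A *\<^sub>v col U j) = (\<Sum>k<n. cnj (col U j $ k) * (A *\<^sub>v col U j) $ k)"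
    by (rule conj_dot', insert Ac u, auto)
  also have "\<dots> = (\<Sum>k<n. cnj (U $$ (k,j)) * U $$ (k,j)) * complex_of_real (lam j)"
    unfolding sum_distrib_right
  proof (rule sum.cong, simp)
    fix k assume "k \<in> {..<n}" hence k: "k < n" by simp
    have "(A *\<^sub>v col U j) $ k = (A * U) $$ (k,j)" by (rule mult_col_vec[OF Ac U j k])
    also have "\<dots> = U $$ (k,j) * complex_of_real (lam j)" unfolding AU by (rule mult_dmat_right[OF U k j])
    finally show "cnj (col U j $ k) * (A *\<^sub>v col U j) $ k = cnj (U $$ (k, j)) * U $$ (k, j) * complex_of_real (lam j)"
      using U k j by simp
  qed
  also have "(\<Sum>k<n. cnj (U $$ (k,j)) * U $$ (k,j)) = (mat_adjoint U * U) $$ (j,j)"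
    using mult_entry[OF adj_carrier[OF U] U j j] U j by simp
  also have "\<dots> = 1" using UU j by simp
  finally have "conjugate (col U j) \<bullet> (A *\<^sub>v col U j) = complex_of_real (lam j)" by simp
  moreover have "0 \<le> conjugate (col U j) \<bullet> (A *\<^sub>v col U j)" using A u unfolding psd_mat_def by auto
  ultimately show ?thesis by (simp add: less_eq_complex_def)
qed

lemma sqrt_exists: assumes A: "psd_mat n A" and U: "U \<in> carrier_mat n n" and UU: "mat_adjoint U * U = 1\<^sub>m n"
  and UU2: "U * mat_adjoint U = 1\<^sub>m n"
  and AU: "A * U = U * dmat n (\<lambda>i. complex_of_real (lam i))"
  and lam: "\<And>j. j < n \<Longrightarrow> lam j \<ge> 0"
  defines "S \<equiv> U * dmat n (\<lambda>i. complex_of_real (sqrt (lam i))) * mat_adjoint U"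
  shows "psd_mat n S \<and> S * S = A"
proof -
  have Ac: "A \<in> carrier_mat n n" using A unfolding psd_mat_def by auto
  have Ua: "mat_adjoint U \<in> carrier_mat n n" using U by simp
  define D4 where "D4 = dmat n (\<lambda>i. complex_of_real (sqrt (sqrt (lam i))))"
  define D2 where "D2 = dmat n (\<lambda>i. complex_of_real (sqrt (lam i)))"
  define D where "D = dmat n (\<lambda>i. complex_of_real (lam i))"
  have D4: "D4 \<in> carrier_mat n n" and D2: "D2 \<in> carrier_mat n n" and D: "D \<in> carrier_mat n n"
    unfolding D4_def D2_def D_def by simp_all
  have D44: "D4 * D4 = D2" unfolding D4_def D2_def dmat_mult
    by (rule eq_matI, auto simp: dmat_def of_real_mult[symmetric] lam simp del: of_real_mult)
  have D22: "D2 * D2 = D" unfolding D_def D2_def dmat_mult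
    by (rule eq_matI, auto simp: dmat_def of_real_mult[symmetric] lam simp del: of_real_mult)
  define R where "R = D4 * mat_adjoint U"
  have R: "R \<in> carrier_mat n n" unfolding R_def using D4 Ua by simp
  have Radj: "mat_adjoint R = U * D4" unfolding R_def D4_def
    using adj_mult[OF dmat_carrier Ua] adj_dmat_real by simp
  have "mat_adjoint R * R = (U * D4) * (D4 * mat_adjoint U)" using Radj R_def by simp
  also have "\<dots> = U * (D4 * (D4 * mat_adjoint U))"
    by (rule assoc_mult_mat[OF U D4 mult_carrier_mat[OF D4 Ua]])
  also have "D4 * (D4 * mat_adjoint U) = D2 * mat_adjoint U"
    using assoc_mult_mat[OF D4 D4 Ua] D44 by simp
  also have "U * (D2 * mat_adjoint U) = S" unfolding S_def D2_def
    by (rule assoc_mult_mat[OF U dmat_carrier Ua, symmetric])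
  finally have SR: "S = mat_adjoint R * R" by simp
  have psdS: "psd_mat n S" unfolding SR by (rule psd_XX[OF R])
  define P where "P = U * D2"
  have P: "P \<in> carrier_mat n n" unfolding P_def using U D2 by simp
  have SP: "S = P * mat_adjoint U" unfolding S_def P_def D2_def by simp
  have UP: "mat_adjoint U * P = D2" unfolding P_def
    using assoc_mult_mat[OF Ua U D2, symmetric] UU D2 by simp
  have "S * S = P * (mat_adjoint U * (P * mat_adjoint U))" unfolding SP
    by (rule assoc_mult_mat[OF P Ua mult_carrier_mat[OF P Ua]])
  also have "mat_adjoint U * (P * mat_adjoint U) = D2 * mat_adjoint U"
    using assoc_mult_mat[OF Ua P Ua, symmetric] UP by simp
  also have "P * (D2 * mat_adjoint U) = (P * D2) * mat_adjoint U"
    by (rule assoc_mult_mat[OF P D2 Ua, symmetric])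
  also have "P * D2 = U * D" unfolding P_def using assoc_mult_mat[OF U D2 D2] D22 by simp
  also have "U * D = A * U" unfolding AU D_def ..
  also have "(A * U) * mat_adjoint U = A" using assoc_mult_mat[OF Ac U Ua] UU2 Ac by simp
  finally show ?thesis using psdS by simp
qed


lemma sqrt_unique: assumes T: "psd_mat n T" and TT: "T * T = A"
  and U: "U \<in> carrier_mat n n" and UU: "mat_adjoint U * U = 1\<^sub>m n" and UU2: "U * mat_adjoint U = 1\<^sub>m n"
  and AU: "A * U = U * dmat n (\<lambda>i. complex_of_real (lam i))"
  and lam: "\<And>j. j < n \<Longrightarrow> lam j \<ge> 0"
  shows "T = U * dmat n (\<lambda>i. complex_of_real (sqrt (lam i))) * mat_adjoint U"
proof -
  have Tc: "T \<in> carrier_mat n n" and hT: "hermitian_mat T" using T unfolding psd_mat_def by auto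
  have Ac: "A \<in> carrier_mat n n" using TT Tc by auto
  have TUc: "T * U \<in> carrier_mat n n" using Tc U by simp
  have Ua: "mat_adjoint U \<in> carrier_mat n n" using U by simp
  have col: "(T * U) $$ (k,j) = U $$ (k,j) * complex_of_real (sqrt (lam j))" if k: "k < n" and j: "j < n" for k j
  proof -
    define t where "t l = (T * U) $$ (l,j)" for l
    define u where "u l = U $$ (l,j)" for l
    define s where "s = sqrt (lam j)"
    have s: "s \<ge> 0" and ls: "lam j = s * s" unfolding s_def using lam[OF j] by (auto simp: real_sqrt_mult_self)
    have F1: "(\<Sum>l<n. T $$ (i,l) * t l) = u i * complex_of_real (lam j)" if i: "i < n" for i
    proof -
      have "(\<Sum>l<n. T $$ (i,l) * t l) = (T * (T * U)) $$ (i,j)" unfolding t_def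
        by (rule mult_entry[symmetric, OF Tc TUc i j])
      also have "\<dots> = (A * U) $$ (i,j)" using assoc_mult_mat[OF Tc Tc U] TT by simp
      also have "\<dots> = u i * complex_of_real (lam j)" unfolding AU u_def by (rule mult_dmat_right[OF U i j])
      finally show ?thesis .
    qed
    have tsum: "t i = (\<Sum>l<n. T $$ (i,l) * u l)" if i: "i < n" for i
      unfolding t_def u_def by (rule mult_entry[OF Tc U i j])
    have "t k = complex_of_real s * u k"
    proof (cases "s = 0")
      case True
      hence l0: "lam j = 0" using ls by simp
      have "(\<Sum>i<n. cnj (t i) * t i) = (\<Sum>i<n. \<Sum>l<n. cnj (u l) * (T $$ (l,i) * t i))"
      proof (rule sum.cong, simp)
        fix i assume "i \<in> {..<n}" hence i: "i < n" by simp
        have "cnj (t i) = (\<Sum>l<n. cnj (u l) * T $$ (l,i))" unfolding tsum[OF i] cnj_sum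
          by (rule sum.cong, simp, simp add: hermitian_entry[OF hT Tc, symmetric] i mult.commute)
        thus "cnj (t i) * t i = (\<Sum>l<n. cnj (u l) * (T $$ (l,i) * t i))"
          by (simp add: sum_distrib_right mult.assoc)
      qed
      also have "\<dots> = (\<Sum>l<n. cnj (u l) * (\<Sum>i<n. T $$ (l,i) * t i))"
        by (subst sum.swap, simp add: sum_distrib_left)
      also have "\<dots> = 0" by (rule sum.neutral, simp add: F1 l0)
      finally have "complex_of_real (\<Sum>i<n. (cmod (t i))^2) = 0" using sum_cnj_mult_self[of t "{..<n}"] by simp
      hence "(\<Sum>i<n. (cmod (t i))^2) = 0" by (simp only: of_real_eq_0_iff)
      hence "\<forall>i\<in>{..<n}. (cmod (t i))^2 = 0" by (subst sum_nonneg_eq_0_iff[symmetric], auto)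
      thus ?thesis using k True by simp
    next
      case False
      hence sp: "s > 0" using s by simp
      define y where "y l = t l - complex_of_real s * u l" for l
      have F2: "(\<Sum>l<n. T $$ (i,l) * y l) = - complex_of_real s * y i" if i: "i < n" for i
      proof -
        have "(\<Sum>l<n. T $$ (i,l) * y l) = (\<Sum>l<n. T $$ (i,l) * t l) - complex_of_real s * (\<Sum>l<n. T $$ (i,l) * u l)"
          unfolding y_def by (simp add: sum_subtractf sum_distrib_left algebra_simps)
        also have "\<dots> = - complex_of_real s * y i" unfolding F1[OF i] tsum[OF i, symmetric] y_def ls
          by (simp add: algebra_simps)
        finally show ?thesis .
      qed
      define yv where "yv = vec n y"
      have yv: "yv \<in> carrier_vec n" unfolding yv_def by simp
      have "conjugate yv \<bullet> (T *\<^sub>v yv) = (\<Sum>i<n. \<Sum>l<n. cnj (yv $ i) * T $$ (i,l) * yv $ l)"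
        by (rule quad_form[OF Tc yv])
      also have "\<dots> = (\<Sum>i<n. cnj (y i) * (\<Sum>l<n. T $$ (i,l) * y l))"
        by (rule sum.cong, simp, simp add: yv_def sum_distrib_left mult.assoc)
      also have "\<dots> = (\<Sum>i<n. cnj (y i) * (- complex_of_real s * y i))"
        by (rule sum.cong, simp, simp add: F2)
      also have "\<dots> = - complex_of_real s * (\<Sum>i<n. cnj (y i) * y i)"
        by (simp add: sum_distrib_left mult.commute mult.left_commute)
      also have "\<dots> = - complex_of_real (s * (\<Sum>i<n. (cmod (y i))^2))"
        unfolding sum_cnj_mult_self by simp
      finally have "0 \<le> - complex_of_real (s * (\<Sum>i<n. (cmod (y i))^2))"
        using T yv unfolding psd_mat_def by metis
      hence "s * (\<Sum>i<n. (cmod (y i))^2) \<le> 0" by (simp add: less_eq_complex_def)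
      hence "(\<Sum>i<n. (cmod (y i))^2) \<le> 0" using sp by (simp add: mult_le_0_iff)
      hence "(\<Sum>i<n. (cmod (y i))^2) = 0" by (simp add: order_antisym sum_nonneg)
      hence "\<forall>i\<in>{..<n}. (cmod (y i))^2 = 0" by (subst sum_nonneg_eq_0_iff[symmetric], auto)
      hence "y k = 0" using k by simp
      thus ?thesis unfolding y_def by simp
    qed
    thus ?thesis unfolding t_def u_def s_def by (simp add: mult.commute)
  qed
  have TU: "T * U = U * dmat n (\<lambda>i. complex_of_real (sqrt (lam i)))"
  proof (rule eq_matI)
    fix i j assume "i < dim_row (U * dmat n (\<lambda>i. complex_of_real (sqrt (lam i))))"
      "j < dim_col (U * dmat n (\<lambda>i. complex_of_real (sqrt (lam i))))"
    hence i: "i < n" and j: "j < n" using U by auto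
    show "(T * U) $$ (i,j) = (U * dmat n (\<lambda>i. complex_of_real (sqrt (lam i)))) $$ (i,j)"
      unfolding col[OF i j] mult_dmat_right[OF U i j] ..
  qed (insert U Tc, auto)
  have "T = T * (U * mat_adjoint U)" using UU2 Tc by simp
  also have "\<dots> = (T * U) * mat_adjoint U" by (rule assoc_mult_mat[OF Tc U Ua, symmetric])
  finally show ?thesis unfolding TU .
qed

lemma psd_sqrt_spec: assumes A: "psd_mat n A"
  shows "\<exists>U lam. U \<in> carrier_mat n n \<and> mat_adjoint U * U = 1\<^sub>m n \<and> U * mat_adjoint U = 1\<^sub>m n
     \<and> A * U = U * dmat n (\<lambda>i. complex_of_real (lam i)) \<and> (\<forall>j<n. lam j \<ge> 0)
     \<and> psd_sqrt A = U * dmat n (\<lambda>i. complex_of_real (sqrt (lam i))) * mat_adjoint U"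
proof -
  have Ac: "A \<in> carrier_mat n n" and hA: "hermitian_mat A" using A unfolding psd_mat_def by auto
  from spectral[OF Ac hA] obtain U lam where U: "U \<in> carrier_mat n n" and UU: "mat_adjoint U * U = 1\<^sub>m n"
    and UU2: "U * mat_adjoint U = 1\<^sub>m n" and AU: "A * U = U * dmat n (\<lambda>i. complex_of_real (lam i))" by blast
  have lam: "\<And>j. j < n \<Longrightarrow> lam j \<ge> 0" using eig_nonneg[OF A U UU AU] by blast
  define S where "S = U * dmat n (\<lambda>i. complex_of_real (sqrt (lam i))) * mat_adjoint U"
  have S: "psd_mat n S \<and> S * S = A" unfolding S_def by (rule sqrt_exists[OF A U UU UU2 AU lam])
  have dimA: "dim_row A = n" using Ac by simp
  have "psd_sqrt A = S" unfolding psd_sqrt_def dimA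
  proof (rule the_equality)
    show "psd_mat n S \<and> S * S = A" by (rule S)
    fix T assume "psd_mat n T \<and> T * T = A"
    thus "T = S" unfolding S_def using sqrt_unique[OF _ _ U UU UU2 AU lam] by blast
  qed
  thus ?thesis using U UU UU2 AU lam unfolding S_def by blast
qed

lemma trace_conj: assumes U: "U \<in> carrier_mat n n" and UU: "mat_adjoint U * U = 1\<^sub>m n"
  shows "trace_mat (U * dmat n f * mat_adjoint U) = (\<Sum>j<n. f j)"
proof -
  have P: "U * dmat n f \<in> carrier_mat n n" using U by simp
  have Ua: "mat_adjoint U \<in> carrier_mat n n" using U by simp
  have "trace_mat (U * dmat n f * mat_adjoint U) = (\<Sum>i<n. (U * dmat n f * mat_adjoint U) $$ (i,i))"
    unfolding trace_mat_def using U by simp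
  also have "\<dots> = (\<Sum>i<n. \<Sum>j<n. f j * (cnj (U $$ (i,j)) * U $$ (i,j)))"
  proof (rule sum.cong, simp)
    fix i assume "i \<in> {..<n}" hence i: "i < n" by simp
    have "(U * dmat n f * mat_adjoint U) $$ (i,i) = (\<Sum>j<n. (U * dmat n f) $$ (i,j) * mat_adjoint U $$ (j,i))"
      by (rule mult_entry[OF P Ua i i])
    also have "\<dots> = (\<Sum>j<n. f j * (cnj (U $$ (i,j)) * U $$ (i,j)))"
    proof (rule sum.cong, simp)
      fix j assume "j \<in> {..<n}" hence j: "j < n" by simp
      show "(U * dmat n f) $$ (i,j) * mat_adjoint U $$ (j,i) = f j * (cnj (U $$ (i,j)) * U $$ (i,j))"
        unfolding mult_dmat_right[OF U i j] using U i j by simp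
    qed
    finally show "(U * dmat n f * mat_adjoint U) $$ (i,i) = (\<Sum>j<n. f j * (cnj (U $$ (i,j)) * U $$ (i,j)))" .
  qed
  also have "\<dots> = (\<Sum>j<n. f j * (\<Sum>i<n. cnj (U $$ (i,j)) * U $$ (i,j)))"
    by (subst sum.swap, simp add: sum_distrib_left)
  also have "\<dots> = (\<Sum>j<n. f j)"
  proof (rule sum.cong, simp)
    fix j assume "j \<in> {..<n}" hence j: "j < n" by simp
    have "(\<Sum>i<n. cnj (U $$ (i,j)) * U $$ (i,j)) = (mat_adjoint U * U) $$ (j,j)"
      using mult_entry[OF Ua U j j] U j by simp
    thus "f j * (\<Sum>i<n. cnj (U $$ (i,j)) * U $$ (i,j)) = f j" using UU j by simp
  qed
  finally show ?thesis .
qed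


lemma cs_sum: fixes x y :: "'a \<Rightarrow> real"
  shows "(\<Sum>i\<in>I. x i * y i) \<le> sqrt (\<Sum>i\<in>I. (x i)^2) * sqrt (\<Sum>i\<in>I. (y i)^2)"
proof (cases "finite I")
  case False thus ?thesis by simp
next
  case fin: True
  define A where "A = (\<Sum>i\<in>I. (x i)^2)"
  define B where "B = (\<Sum>i\<in>I. (y i)^2)"
  have A0: "A \<ge> 0" and B0: "B \<ge> 0" unfolding A_def B_def by (auto intro: sum_nonneg)
  show ?thesis
  proof (cases "A = 0 \<or> B = 0")
    case True
    hence "(\<forall>i\<in>I. x i = 0) \<or> (\<forall>i\<in>I. y i = 0)" unfolding A_def B_def
      using sum_nonneg_eq_0_iff[OF fin, of "\<lambda>i. (x i)^2"] sum_nonneg_eq_0_iff[OF fin, of "\<lambda>i. (y i)^2"] by auto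
    hence z: "(\<Sum>i\<in>I. x i * y i) = 0" by auto
    have "0 \<le> sqrt A * sqrt B" using A0 B0 by simp
    thus ?thesis unfolding z A_def B_def .
  next
    case False
    hence Ap: "A > 0" and Bp: "B > 0" using A0 B0 by auto
    define t where "t = sqrt B / sqrt A"
    have tp: "t > 0" unfolding t_def using Ap Bp by simp
    have pt: "x i * y i \<le> (t * (x i)^2 + (y i)^2 / t) / 2" for i
    proof -
      have "0 \<le> (t * x i - y i)^2 / t" using tp by simp
      also have "(t * x i - y i)^2 / t = t * (x i)^2 - 2 * (x i * y i) + (y i)^2 / t"
        using tp by (simp add: power2_eq_square field_simps)
      finally show ?thesis by simp
    qed
    have sAp: "sqrt A > 0" and sBp: "sqrt B > 0" using Ap Bp by auto
    have sA: "sqrt A * sqrt A = A" and sB: "sqrt B * sqrt B = B" using A0 B0 by auto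
    have tA: "t * A = sqrt A * sqrt B"
    proof -
      have "t * A = (sqrt B / sqrt A) * (sqrt A * sqrt A)" unfolding t_def sA ..
      also have "\<dots> = sqrt A * sqrt B" using sAp by (simp add: divide_simps)
      finally show ?thesis .
    qed
    have Bt: "B / t = sqrt A * sqrt B"
    proof -
      have "B / t = (sqrt B * sqrt B) / (sqrt B / sqrt A)" unfolding t_def sB ..
      also have "\<dots> = sqrt A * sqrt B" using sAp sBp by (simp add: divide_simps)
      finally show ?thesis .
    qed
    have "(\<Sum>i\<in>I. x i * y i) \<le> (\<Sum>i\<in>I. (t * (x i)^2 + (y i)^2 / t) / 2)"
      by (rule sum_mono, rule pt)
    also have "\<dots> = (t * A + B / t) / 2" unfolding A_def B_def
      by (simp add: sum_divide_distrib[symmetric] sum_distrib_left sum.distrib)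
    also have "(t * A + B / t) / 2 = sqrt A * sqrt B" unfolding tA Bt by simp
    finally show ?thesis unfolding A_def B_def .
  qed
qed

lemma cs_complex: fixes x y :: "'a \<Rightarrow> complex"
  shows "cmod (\<Sum>i\<in>I. cnj (x i) * y i) \<le> sqrt (\<Sum>i\<in>I. (cmod (x i))^2) * sqrt (\<Sum>i\<in>I. (cmod (y i))^2)"
proof -
  have "cmod (\<Sum>i\<in>I. cnj (x i) * y i) \<le> (\<Sum>i\<in>I. cmod (cnj (x i) * y i))" by (rule norm_sum)
  also have "\<dots> = (\<Sum>i\<in>I. cmod (x i) * cmod (y i))" by (simp add: norm_mult)
  also have "\<dots> \<le> sqrt (\<Sum>i\<in>I. (cmod (x i))^2) * sqrt (\<Sum>i\<in>I. (cmod (y i))^2)" by (rule cs_sum)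
  finally show ?thesis .
qed

lemma bessel: fixes w :: "nat \<Rightarrow> nat \<Rightarrow> complex" and x :: "nat \<Rightarrow> complex"
  assumes orth: "\<And>j k. j < J \<Longrightarrow> k < J \<Longrightarrow> j \<noteq> k \<Longrightarrow> (\<Sum>r<m. cnj (w j r) * w k r) = 0"
  and nrm: "\<And>j. j < J \<Longrightarrow> (\<Sum>r<m. cnj (w j r) * w j r) = 1 \<or> (\<forall>r<m. w j r = 0)"
  shows "(\<Sum>j<J. (cmod (\<Sum>r<m. cnj (w j r) * x r))^2) \<le> (\<Sum>r<m. (cmod (x r))^2)"
proof -
  define c where "c j = (\<Sum>r<m. cnj (w j r) * x r)" for j
  define T where "T = (\<Sum>j<J. (cmod (c j))^2)"
  define X where "X = (\<Sum>r<m. (cmod (x r))^2)"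
  define y where "y r = (\<Sum>j<J. c j * w j r)" for r
  have T0: "T \<ge> 0" and X0: "X \<ge> 0" unfolding T_def X_def by (auto intro: sum_nonneg)
  have wy: "(\<Sum>r<m. cnj (w j r) * y r) = c j" if j: "j < J" for j
  proof -
    have "(\<Sum>r<m. cnj (w j r) * y r) = (\<Sum>k<J. c k * (\<Sum>r<m. cnj (w j r) * w k r))"
      unfolding y_def by (simp add: sum_distrib_left sum_distrib_right mult_ac, rule sum.swap)
    also have "\<dots> = (\<Sum>k<J. if k = j then c j * (\<Sum>r<m. cnj (w j r) * w j r) else 0)"
      by (rule sum.cong, simp, auto simp: orth j)
    also have "\<dots> = c j * (\<Sum>r<m. cnj (w j r) * w j r)" using j by simp
    also have "\<dots> = c j"
    proof (cases "\<forall>r<m. w j r = 0")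
      case True
      hence "c j = 0" unfolding c_def by simp
      thus ?thesis by simp
    next
      case False thus ?thesis using nrm[OF j] by auto
    qed
    finally show ?thesis .
  qed
  have yx: "(\<Sum>r<m. cnj (y r) * x r) = complex_of_real T"
  proof -
    have "(\<Sum>r<m. cnj (y r) * x r) = (\<Sum>r<m. \<Sum>j<J. cnj (c j) * (cnj (w j r) * x r))"
      unfolding y_def cnj_sum by (simp only: sum_distrib_right, rule sum.cong, simp, rule sum.cong, simp, simp)
    also have "\<dots> = (\<Sum>j<J. cnj (c j) * (\<Sum>r<m. cnj (w j r) * x r))"
      by (simp only: sum_distrib_left, rule sum.swap)
    finally have "(\<Sum>r<m. cnj (y r) * x r) = (\<Sum>j<J. cnj (c j) * c j)" unfolding c_def .
    thus ?thesis unfolding T_def sum_cnj_mult_self .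
  qed
  have yy: "(\<Sum>r<m. (cmod (y r))^2) = T"
  proof -
    have cy: "cnj (y r) = (\<Sum>j<J. cnj (c j) * cnj (w j r))" for r unfolding y_def by simp
    have "(\<Sum>r<m. cnj (y r) * y r) = (\<Sum>r<m. \<Sum>j<J. cnj (c j) * (cnj (w j r) * y r))"
      unfolding cy by (simp only: sum_distrib_right mult.assoc)
    also have "\<dots> = (\<Sum>j<J. cnj (c j) * (\<Sum>r<m. cnj (w j r) * y r))"
      by (simp only: sum_distrib_left, rule sum.swap)
    also have "\<dots> = (\<Sum>j<J. cnj (c j) * c j)" by (rule sum.cong, simp, simp add: wy)
    finally have "complex_of_real (\<Sum>r<m. (cmod (y r))^2) = complex_of_real T"
      unfolding sum_cnj_mult_self T_def .
    thus ?thesis by (simp only: of_real_eq_iff)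
  qed
  have "T = cmod (\<Sum>r<m. cnj (y r) * x r)" unfolding yx using T0 by simp
  also have "\<dots> \<le> sqrt T * sqrt X" unfolding X_def using cs_complex[of y x "{..<m}"] yy by simp
  finally have TX: "T \<le> sqrt T * sqrt X" .
  have "T \<le> X"
  proof (cases "T = 0")
    case True thus ?thesis using X0 by simp
  next
    case False
    hence "sqrt T > 0" using T0 by simp
    moreover have "sqrt T * sqrt T \<le> sqrt T * sqrt X" using TX T0 by simp
    ultimately have "sqrt T \<le> sqrt X" by (meson mult_le_cancel_left_pos)
    thus ?thesis by (simp only: real_sqrt_le_iff)
  qed
  thus ?thesis unfolding T_def X_def c_def .
qed


lemma trace_norm_bound:
  fixes G :: "complex mat" and p :: "nat \<Rightarrow> real" and a b :: "nat \<Rightarrow> nat \<Rightarrow> complex"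
  assumes G: "G \<in> carrier_mat m n" and p: "\<And>i. i < K \<Longrightarrow> p i \<ge> 0"
  and Gent: "\<And>r c. r < m \<Longrightarrow> c < n \<Longrightarrow> G $$ (r,c) = (\<Sum>i<K. complex_of_real (p i) * (a i r * b i c))"
  shows "trace_norm G \<le> (\<Sum>i<K. p i * (sqrt (\<Sum>r<m. (cmod (a i r))^2) * sqrt (\<Sum>c<n. (cmod (b i c))^2)))"
proof -
  have Ga: "mat_adjoint G \<in> carrier_mat n m" using G by simp
  define A where "A = mat_adjoint G * G"
  have Ac: "A \<in> carrier_mat n n" unfolding A_def by (rule mult_carrier_mat[OF Ga G])
  have psdA: "psd_mat n A" unfolding A_def by (rule psd_XX[OF G])
  from psd_sqrt_spec[OF psdA] obtain U lam where U: "U \<in> carrier_mat n n" and UU: "mat_adjoint U * U = 1\<^sub>m n"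
    and UU2: "U * mat_adjoint U = 1\<^sub>m n" and AU: "A * U = U * dmat n (\<lambda>i. complex_of_real (lam i))"
    and lam: "\<forall>j<n. lam j \<ge> 0"
    and sq: "psd_sqrt A = U * dmat n (\<lambda>i. complex_of_real (sqrt (lam i))) * mat_adjoint U" by blast
  have Ua: "mat_adjoint U \<in> carrier_mat n n" using U by simp
  have tn: "trace_norm G = (\<Sum>j<n. sqrt (lam j))"
    unfolding trace_norm_def A_def[symmetric] sq trace_conj[OF U UU] by simp
  define GU where "GU = G * U"
  have GU: "GU \<in> carrier_mat m n" unfolding GU_def using G U by simp
  define g where "g j r = GU $$ (r,j)" for j r
  define D where "D = dmat n (\<lambda>i. complex_of_real (lam i))"
  have D: "D \<in> carrier_mat n n" unfolding D_def by simp
  have adjGU: "mat_adjoint GU * GU = D"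
  proof -
    have "mat_adjoint GU * GU = (mat_adjoint U * mat_adjoint G) * (G * U)"
      unfolding GU_def adj_mult[OF G U] ..
    also have "\<dots> = mat_adjoint U * (mat_adjoint G * (G * U))"
      by (rule assoc_mult_mat[OF Ua Ga mult_carrier_mat[OF G U]])
    also have "mat_adjoint G * (G * U) = A * U" unfolding A_def
      by (rule assoc_mult_mat[OF Ga G U, symmetric])
    also have "mat_adjoint U * (A * U) = (mat_adjoint U * U) * D" unfolding AU D_def[symmetric]
      by (rule assoc_mult_mat[OF Ua U D, symmetric])
    finally show ?thesis using UU D by simp
  qed
  have gg: "(\<Sum>r<m. cnj (g j r) * g k r) = (if j = k then complex_of_real (lam j) else 0)"
    if j: "j < n" and k: "k < n" for j k
  proof -
    have "(\<Sum>r<m. cnj (g j r) * g k r) = (mat_adjoint GU * GU) $$ (j,k)"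
      unfolding g_def mult_entry[OF adj_carrier[OF GU] GU j k]
      by (rule sum.cong, simp, insert GU j k, simp)
    thus ?thesis unfolding adjGU D_def dmat_def using j k by simp
  qed
  define s where "s j = sqrt (lam j)" for j
  define w where "w j r = g j r / complex_of_real (s j)" for j r
  have lam_g: "complex_of_real (lam j) = (\<Sum>r<m. cnj (g j r) * g j r)" if j: "j < n" for j
    using gg[OF j j] by simp
  have sl: "s j * s j = lam j" if j: "j < n" for j unfolding s_def using lam j by simp
  have orth: "(\<Sum>r<m. cnj (w j r) * w k r) = 0" if "j < n" "k < n" "j \<noteq> k" for j k
  proof -
    have "(\<Sum>r<m. cnj (w j r) * w k r) = (\<Sum>r<m. cnj (g j r) * g k r) / (complex_of_real (s j) * complex_of_real (s k))"
      unfolding w_def sum_divide_distrib by (rule sum.cong, simp, simp)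
    thus ?thesis using gg that by simp
  qed
  have nrm: "(\<Sum>r<m. cnj (w j r) * w j r) = 1 \<or> (\<forall>r<m. w j r = 0)" if j: "j < n" for j
  proof (cases "s j = 0")
    case True thus ?thesis unfolding w_def by simp
  next
    case False
    have "(\<Sum>r<m. cnj (w j r) * w j r) = (\<Sum>r<m. cnj (g j r) * g j r) / (complex_of_real (s j) * complex_of_real (s j))"
      unfolding w_def sum_divide_distrib by (rule sum.cong, simp, simp)
    also have "\<dots> = 1" unfolding lam_g[OF j, symmetric] of_real_mult[symmetric] sl[OF j] using sl[OF j] False
      by (simp add: s_def)
    finally show ?thesis by simp
  qed
  have sw: "complex_of_real (s j) = (\<Sum>r<m. cnj (w j r) * g j r)" if j: "j < n" for j
  proof (cases "s j = 0")
    case True thus ?thesis unfolding w_def by simp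
  next
    case False
    have "(\<Sum>r<m. cnj (w j r) * g j r) = (\<Sum>r<m. cnj (g j r) * g j r) / complex_of_real (s j)"
      unfolding w_def sum_divide_distrib by (rule sum.cong, simp, simp)
    also have "\<dots> = complex_of_real (s j)" unfolding lam_g[OF j, symmetric] sl[OF j, symmetric] using False
      by simp
    finally show ?thesis by simp
  qed
  define \<beta> where "\<beta> i j = (\<Sum>c<n. b i c * U $$ (c,j))" for i j
  define \<alpha> where "\<alpha> i j = (\<Sum>r<m. cnj (w j r) * a i r)" for i j
  have gdec: "g j r = (\<Sum>i<K. complex_of_real (p i) * (a i r * \<beta> i j))" if j: "j < n" and r: "r < m" for j r
  proof -
    have "g j r = (\<Sum>c<n. G $$ (r,c) * U $$ (c,j))" unfolding g_def GU_def by (rule mult_entry[OF G U r j])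
    also have "\<dots> = (\<Sum>c<n. \<Sum>i<K. complex_of_real (p i) * (a i r * (b i c * U $$ (c,j))))"
      by (rule sum.cong, simp, simp add: Gent r sum_distrib_right mult.assoc)
    also have "\<dots> = (\<Sum>i<K. complex_of_real (p i) * (a i r * \<beta> i j))"
      unfolding \<beta>_def by (subst sum.swap, simp add: sum_distrib_left)
    finally show ?thesis .
  qed
  have swdec: "complex_of_real (s j) = (\<Sum>i<K. complex_of_real (p i) * (\<alpha> i j * \<beta> i j))" if j: "j < n" for j
  proof -
    have "complex_of_real (s j) = (\<Sum>r<m. \<Sum>i<K. complex_of_real (p i) * ((cnj (w j r) * a i r) * \<beta> i j))"
      unfolding sw[OF j] by (rule sum.cong, simp, simp add: gdec j sum_distrib_left mult_ac)
    also have "\<dots> = (\<Sum>i<K. complex_of_real (p i) * (\<alpha> i j * \<beta> i j))"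
      unfolding \<alpha>_def by (subst sum.swap, simp add: sum_distrib_left sum_distrib_right)
    finally show ?thesis .
  qed
  have "complex_of_real (\<Sum>j<n. s j) = (\<Sum>i<K. complex_of_real (p i) * (\<Sum>j<n. \<alpha> i j * \<beta> i j))"
    unfolding of_real_sum by (subst sum.cong[OF refl swdec], simp, subst sum.swap, simp add: sum_distrib_left)
  hence "(\<Sum>j<n. s j) = Re (\<Sum>i<K. complex_of_real (p i) * (\<Sum>j<n. \<alpha> i j * \<beta> i j))"
    by (metis Re_complex_of_real)
  also have "\<dots> = (\<Sum>i<K. p i * Re (\<Sum>j<n. \<alpha> i j * \<beta> i j))" by (simp add: Re_sum)
  also have "\<dots> \<le> (\<Sum>i<K. p i * (sqrt (\<Sum>r<m. (cmod (a i r))^2) * sqrt (\<Sum>c<n. (cmod (b i c))^2)))"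
  proof (rule sum_mono)
    fix i assume "i \<in> {..<K}" hence i: "i < K" by simp
    have "Re (\<Sum>j<n. \<alpha> i j * \<beta> i j) \<le> cmod (\<Sum>j<n. cnj (cnj (\<alpha> i j)) * \<beta> i j)" 
      using complex_Re_le_cmod[of "\<Sum>j<n. \<alpha> i j * \<beta> i j"] by (simp only: complex_cnj_cnj)
    also have "\<dots> \<le> sqrt (\<Sum>j<n. (cmod (cnj (\<alpha> i j)))^2) * sqrt (\<Sum>j<n. (cmod (\<beta> i j))^2)"
      by (rule cs_complex)
    also have "\<dots> \<le> sqrt (\<Sum>r<m. (cmod (a i r))^2) * sqrt (\<Sum>c<n. (cmod (b i c))^2)"
    proof (rule mult_mono)
      have "(\<Sum>j<n. (cmod (cnj (\<alpha> i j)))^2) \<le> (\<Sum>r<m. (cmod (a i r))^2)"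
        unfolding complex_mod_cnj \<alpha>_def by (rule bessel[OF orth nrm])
      thus "sqrt (\<Sum>j<n. (cmod (cnj (\<alpha> i j)))^2) \<le> sqrt (\<Sum>r<m. (cmod (a i r))^2)" by simp
      define u where "u j c = cnj (U $$ (c,j))" for j c
      have uo: "(\<Sum>c<n. cnj (u j c) * u k c) = (if j = k then 1 else 0)" if "j < n" "k < n" for j k
      proof -
        have "(\<Sum>c<n. cnj (u j c) * u k c) = (mat_adjoint U * U) $$ (k,j)"
          unfolding u_def mult_entry[OF Ua U that(2) that(1)]
          by (rule sum.cong, simp, insert U that, simp add: mult.commute)
        thus ?thesis using UU that by simp
      qed
      have "(\<Sum>j<n. (cmod (\<beta> i j))^2) = (\<Sum>j<n. (cmod (\<Sum>c<n. cnj (u j c) * b i c))^2)"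
        unfolding \<beta>_def u_def by (simp add: mult.commute)
      also have "\<dots> \<le> (\<Sum>c<n. (cmod (b i c))^2)"
        by (rule bessel, insert uo, auto)
      finally show "sqrt (\<Sum>j<n. (cmod (\<beta> i j))^2) \<le> sqrt (\<Sum>c<n. (cmod (b i c))^2)" by simp
    qed (simp_all add: sum_nonneg)
    finally have "Re (\<Sum>j<n. \<alpha> i j * \<beta> i j) \<le> sqrt (\<Sum>r<m. (cmod (a i r))^2) * sqrt (\<Sum>c<n. (cmod (b i c))^2)" .
    thus "p i * Re (\<Sum>j<n. \<alpha> i j * \<beta> i j) \<le> p i * (sqrt (\<Sum>r<m. (cmod (a i r))^2) * sqrt (\<Sum>c<n. (cmod (b i c))^2))"
      by (rule mult_left_mono[OF _ p[OF i]])
  qed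
  finally show ?thesis unfolding tn s_def .
qed


lemma tr_mult: assumes A: "A \<in> carrier_mat d d" and B: "B \<in> carrier_mat d d"
  shows "trace_mat (A * B) = (\<Sum>i<d. \<Sum>j<d. A $$ (i,j) * B $$ (j,i))"
proof -
  have "trace_mat (A * B) = (\<Sum>i<d. (A * B) $$ (i,i))" unfolding trace_mat_def using A by simp
  also have "\<dots> = (\<Sum>i<d. \<Sum>j<d. A $$ (i,j) * B $$ (j,i))"
    by (rule sum.cong, simp, rule mult_entry[OF A B], auto)
  finally show ?thesis .
qed

lemma density_frob: assumes rho: "density_mat d \<rho>"
  shows "(\<Sum>i<d. \<Sum>j<d. (cmod (\<rho> $$ (i,j)))^2) \<le> 1"
proof -
  have psd: "psd_mat d \<rho>" and tr: "trace_mat \<rho> = 1" using rho unfolding density_mat_def by auto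
  have rc: "\<rho> \<in> carrier_mat d d" and h: "hermitian_mat \<rho>" using psd unfolding psd_mat_def by auto
  from spectral[OF rc h] obtain U lam where U: "U \<in> carrier_mat d d" and UU: "mat_adjoint U * U = 1\<^sub>m d"
    and UU2: "U * mat_adjoint U = 1\<^sub>m d" and AU: "\<rho> * U = U * dmat d (\<lambda>i. complex_of_real (lam i))" by blast
  have lam: "\<And>j. j < d \<Longrightarrow> lam j \<ge> 0" using eig_nonneg[OF psd U UU AU] by blast
  have Ua: "mat_adjoint U \<in> carrier_mat d d" using U by simp
  define D where "D = dmat d (\<lambda>i. complex_of_real (lam i))"
  have D: "D \<in> carrier_mat d d" unfolding D_def by simp
  have rhoD: "\<rho> = U * D * mat_adjoint U"
  proof -
    have "\<rho> = \<rho> * (U * mat_adjoint U)" using UU2 rc by simp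
    also have "\<dots> = (\<rho> * U) * mat_adjoint U" by (rule assoc_mult_mat[OF rc U Ua, symmetric])
    finally show ?thesis unfolding AU D_def .
  qed
  define P where "P = U * D"
  have P: "P \<in> carrier_mat d d" unfolding P_def using U D by simp
  have UP: "mat_adjoint U * P = D" unfolding P_def
    using assoc_mult_mat[OF Ua U D, symmetric] UU D by simp
  have DD: "D * D = dmat d (\<lambda>i. complex_of_real (lam i * lam i))" unfolding D_def dmat_mult by simp
  have "\<rho> * \<rho> = P * (mat_adjoint U * (P * mat_adjoint U))" unfolding rhoD P_def[symmetric]
    by (rule assoc_mult_mat[OF P Ua mult_carrier_mat[OF P Ua]])
  also have "mat_adjoint U * (P * mat_adjoint U) = D * mat_adjoint U"
    using assoc_mult_mat[OF Ua P Ua, symmetric] UP by simp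
  also have "P * (D * mat_adjoint U) = (P * D) * mat_adjoint U"
    by (rule assoc_mult_mat[OF P D Ua, symmetric])
  also have "P * D = U * (D * D)" unfolding P_def by (rule assoc_mult_mat[OF U D D])
  finally have rr: "\<rho> * \<rho> = U * dmat d (\<lambda>i. complex_of_real (lam i * lam i)) * mat_adjoint U" unfolding DD .
  have trr: "trace_mat (\<rho> * \<rho>) = (\<Sum>j<d. complex_of_real (lam j * lam j))"
    unfolding rr by (rule trace_conj[OF U UU])
  have tr1: "(\<Sum>j<d. complex_of_real (lam j)) = 1" using tr unfolding rhoD D_def trace_conj[OF U UU] .
  hence sl: "(\<Sum>j<d. lam j) = 1" unfolding of_real_sum[symmetric] by (simp only: of_real_eq_1_iff)
  have le1: "lam j \<le> 1" if j: "j < d" for j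
  proof -
    have "lam j \<le> (\<Sum>j<d. lam j)" by (rule member_le_sum, insert j lam, auto)
    thus ?thesis using sl by simp
  qed
  have "(\<Sum>j<d. lam j * lam j) \<le> (\<Sum>j<d. lam j)"
    by (rule sum_mono, insert lam le1, simp add: mult_left_le)
  hence sll: "(\<Sum>j<d. lam j * lam j) \<le> 1" using sl by simp
  have "complex_of_real (\<Sum>i<d. \<Sum>j<d. (cmod (\<rho> $$ (i,j)))^2) = (\<Sum>i<d. \<Sum>j<d. \<rho> $$ (i,j) * \<rho> $$ (j,i))"
    unfolding of_real_sum
  proof (rule sum.cong, simp, rule sum.cong, simp)
    fix i j assume "i \<in> {..<d}" "j \<in> {..<d}"
    hence i: "i < d" and j: "j < d" by auto
    show "complex_of_real ((cmod (\<rho> $$ (i,j)))^2) = \<rho> $$ (i,j) * \<rho> $$ (j,i)"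
      unfolding hermitian_entry[OF h rc i j] by (rule complex_norm_square)
  qed
  also have "\<dots> = trace_mat (\<rho> * \<rho>)" by (rule tr_mult[OF rc rc, symmetric])
  also have "\<dots> = complex_of_real (\<Sum>j<d. lam j * lam j)" unfolding trr of_real_sum ..
  finally have "(\<Sum>i<d. \<Sum>j<d. (cmod (\<rho> $$ (i,j)))^2) = (\<Sum>j<d. lam j * lam j)" by (simp only: of_real_eq_iff)
  thus ?thesis using sll by simp
qed


lemma swap3: "(\<Sum>i\<in>I. \<Sum>j\<in>J. \<Sum>a\<in>A. h i j a) = (\<Sum>a\<in>A. \<Sum>i\<in>I. \<Sum>j\<in>J. h i j a)"
proof -
  have "(\<Sum>i\<in>I. \<Sum>j\<in>J. \<Sum>a\<in>A. h i j a) = (\<Sum>i\<in>I. \<Sum>a\<in>A. \<Sum>j\<in>J. h i j a)"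
    by (rule sum.cong, simp, rule sum.swap)
  also have "\<dots> = (\<Sum>a\<in>A. \<Sum>i\<in>I. \<Sum>j\<in>J. h i j a)" by (rule sum.swap)
  finally show ?thesis .
qed

lemma bilin: fixes f g :: "'a \<Rightarrow> complex" and F G :: "'a \<Rightarrow> nat \<Rightarrow> nat \<Rightarrow> complex"
  shows "(\<Sum>i\<in>I. \<Sum>j\<in>J. (\<Sum>a\<in>A. f a * F a i j) * (\<Sum>b\<in>B. g b * G b j i)) =
    (\<Sum>a\<in>A. \<Sum>b\<in>B. f a * g b * (\<Sum>i\<in>I. \<Sum>j\<in>J. F a i j * G b j i))"
proof -
  have "(\<Sum>i\<in>I. \<Sum>j\<in>J. (\<Sum>a\<in>A. f a * F a i j) * (\<Sum>b\<in>B. g b * G b j i)) =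
     (\<Sum>i\<in>I. \<Sum>j\<in>J. \<Sum>a\<in>A. \<Sum>b\<in>B. f a * g b * (F a i j * G b j i))"
    by (rule sum.cong, simp, rule sum.cong, simp, unfold sum_product, rule sum.cong, simp, rule sum.cong, simp, simp add: mult_ac)
  also have "\<dots> = (\<Sum>a\<in>A. \<Sum>i\<in>I. \<Sum>j\<in>J. \<Sum>b\<in>B. f a * g b * (F a i j * G b j i))" by (rule swap3)
  also have "\<dots> = (\<Sum>a\<in>A. \<Sum>b\<in>B. \<Sum>i\<in>I. \<Sum>j\<in>J. f a * g b * (F a i j * G b j i))"
    by (rule sum.cong, simp, rule swap3)
  also have "\<dots> = (\<Sum>a\<in>A. \<Sum>b\<in>B. f a * g b * (\<Sum>i\<in>I. \<Sum>j\<in>J. F a i j * G b j i))"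
    by (simp only: sum_distrib_left)
  finally show ?thesis .
qed

lemma lin1: fixes f :: "'a \<Rightarrow> complex" and F :: "'a \<Rightarrow> nat \<Rightarrow> nat \<Rightarrow> complex"
  shows "(\<Sum>i\<in>I. \<Sum>j\<in>J. (\<Sum>a\<in>A. f a * F a i j) * X j i) = (\<Sum>a\<in>A. f a * (\<Sum>i\<in>I. \<Sum>j\<in>J. F a i j * X j i))"
proof -
  have "(\<Sum>i\<in>I. \<Sum>j\<in>J. (\<Sum>a\<in>A. f a * F a i j) * X j i) = (\<Sum>i\<in>I. \<Sum>j\<in>J. \<Sum>a\<in>A. f a * (F a i j * X j i))"
    by (rule sum.cong, simp, rule sum.cong, simp, simp add: sum_distrib_right mult.assoc)
  also have "\<dots> = (\<Sum>a\<in>A. \<Sum>i\<in>I. \<Sum>j\<in>J. f a * (F a i j * X j i))" by (rule swap3)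
  also have "\<dots> = (\<Sum>a\<in>A. f a * (\<Sum>i\<in>I. \<Sum>j\<in>J. F a i j * X j i))" by (simp only: sum_distrib_left)
  finally show ?thesis .
qed

lemma sum_if_one: "finite A \<Longrightarrow> k \<in> A \<Longrightarrow> (\<Sum>l\<in>A. (if l = k then c else 0)) = (c :: 'b :: comm_monoid_add)"
  by simp


lemma pair_sum: "(\<Sum>q\<in>{..<N} \<times> {..<M}. g (fst q) (snd q)) = (\<Sum>a<N. \<Sum>k<M. g a k)"
  by (simp add: sum.cartesian_product split_beta)

lemma cmod_sub_real: "(cmod (z - complex_of_real r))^2 = (cmod z)^2 - 2 * r * Re z + r^2"
  unfolding cmod_power2 by (simp add: power2_eq_square algebra_simps)

lemma povm_bound:
  assumes P: "IC_NM_POVM d N M x E" and rho: "density_mat d \<rho>"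
  shows "(\<Sum>\<alpha><N. \<Sum>k<M. (cmod (trace_mat (E \<alpha> k * \<rho>)))^2) \<le> K_const d M x"
proof -
  have NM: "NM_POVM d N M x E" and IC: "N * (M - 1) = d ^ 2 - 1" using P unfolding IC_NM_POVM_def by auto
  note Q = NM[unfolded NM_POVM_def]
  note M2 = Q[THEN conjunct1]
  note xl = Q[THEN conjunct2, THEN conjunct1]
  note psdE = Q[THEN conjunct2, THEN conjunct2, THEN conjunct2, THEN conjunct1]
  note sumE = Q[THEN conjunct2, THEN conjunct2, THEN conjunct2, THEN conjunct2, THEN conjunct1]
  note trE = Q[THEN conjunct2, THEN conjunct2, THEN conjunct2, THEN conjunct2, THEN conjunct2, THEN conjunct1]
  note trEE = Q[THEN conjunct2, THEN conjunct2, THEN conjunct2, THEN conjunct2, THEN conjunct2, THEN conjunct2, THEN conjunct1]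
  note trEkl = Q[THEN conjunct2, THEN conjunct2, THEN conjunct2, THEN conjunct2, THEN conjunct2, THEN conjunct2, THEN conjunct2, THEN conjunct1]
  note trEab = Q[THEN conjunct2, THEN conjunct2, THEN conjunct2, THEN conjunct2, THEN conjunct2, THEN conjunct2, THEN conjunct2, THEN conjunct2]
  have psd: "psd_mat d \<rho>" and trr: "trace_mat \<rho> = 1" using rho unfolding density_mat_def by auto
  have rc: "\<rho> \<in> carrier_mat d d" and hr: "hermitian_mat \<rho>" using psd unfolding psd_mat_def by auto
  have d0: "d > 0"
  proof (rule ccontr)
    assume "\<not> d > 0" hence "d = 0" by simp
    hence "trace_mat \<rho> = 0" unfolding trace_mat_def using rc by simp
    thus False using trr by simp
  qed
  have Ec: "E \<alpha> k \<in> carrier_mat d d" and hE: "hermitian_mat (E \<alpha> k)" if "\<alpha> < N" "k < M" for \<alpha> k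
    using psdE that unfolding psd_mat_def by auto
  define I where "I = {..<N} \<times> {..<M}"
  have finI: "finite I" unfolding I_def by simp
  define p where "p \<alpha> k = trace_mat (E \<alpha> k * \<rho>)" for \<alpha> k
  have pdef: "p \<alpha> k = (\<Sum>i<d. \<Sum>j<d. E \<alpha> k $$ (i,j) * \<rho> $$ (j,i))" if "\<alpha> < N" "k < M" for \<alpha> k
    unfolding p_def by (rule tr_mult[OF Ec[OF that] rc])
  have preal: "p \<alpha> k = complex_of_real (Re (p \<alpha> k))" if ak: "\<alpha> < N" "k < M" for \<alpha> k
  proof -
    have "cnj (p \<alpha> k) = (\<Sum>i<d. \<Sum>j<d. E \<alpha> k $$ (j,i) * \<rho> $$ (i,j))"
      unfolding pdef[OF ak] cnj_sum
    proof (rule sum.cong, simp, rule sum.cong, simp)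
      fix i j assume "i \<in> {..<d}" "j \<in> {..<d}" hence i: "i < d" and j: "j < d" by auto
      show "cnj (E \<alpha> k $$ (i,j) * \<rho> $$ (j,i)) = E \<alpha> k $$ (j,i) * \<rho> $$ (i,j)"
        unfolding hermitian_entry[OF hE[OF ak] Ec[OF ak] i j] hermitian_entry[OF hr rc j i] by simp
    qed
    also have "\<dots> = p \<alpha> k" unfolding pdef[OF ak] by (rule sum.swap)
    finally have "cnj (p \<alpha> k) = p \<alpha> k" .
    hence "Im (cnj (p \<alpha> k)) = Im (p \<alpha> k)" by simp
    hence "Im (p \<alpha> k) = 0" by simp
    thus ?thesis by (simp add: complex_eq_iff)
  qed
  define pr where "pr \<alpha> k = Re (p \<alpha> k)" for \<alpha> k
  have sum_p: "(\<Sum>k<M. pr \<alpha> k) = 1" if a: "\<alpha> < N" for \<alpha>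
  proof -
    have "(\<Sum>k<M. p \<alpha> k) = (\<Sum>k<M. \<Sum>i<d. \<Sum>j<d. E \<alpha> k $$ (i,j) * \<rho> $$ (j,i))"
      by (rule sum.cong, simp, rule pdef[OF a], simp)
    also have "\<dots> = (\<Sum>i<d. \<Sum>j<d. \<Sum>k<M. E \<alpha> k $$ (i,j) * \<rho> $$ (j,i))" by (rule swap3[symmetric])
    also have "\<dots> = (\<Sum>i<d. \<Sum>j<d. (if i = j then \<rho> $$ (j,i) else 0))"
    proof (rule sum.cong, simp, rule sum.cong, simp)
      fix i j assume "i \<in> {..<d}" "j \<in> {..<d}" hence i: "i < d" and j: "j < d" by auto
      have "(\<Sum>k<M. E \<alpha> k $$ (i,j) * \<rho> $$ (j,i)) = (\<Sum>k<M. E \<alpha> k $$ (i,j)) * \<rho> $$ (j,i)"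
        by (simp add: sum_distrib_right)
      also have "\<dots> = (if i = j then \<rho> $$ (j,i) else 0)" using sumE a i j by simp
      finally show "(\<Sum>k<M. E \<alpha> k $$ (i,j) * \<rho> $$ (j,i)) = (if i = j then \<rho> $$ (j,i) else 0)" .
    qed
    also have "\<dots> = (\<Sum>i<d. \<rho> $$ (i,i))" by simp
    also have "\<dots> = 1" using trr rc unfolding trace_mat_def by simp
    finally have "(\<Sum>k<M. p \<alpha> k) = 1" .
    moreover have "(\<Sum>k<M. complex_of_real (pr \<alpha> k)) = (\<Sum>k<M. p \<alpha> k)"
      by (rule sum.cong, simp, simp add: pr_def preal[OF a, symmetric])
    ultimately have "(\<Sum>k<M. complex_of_real (pr \<alpha> k)) = 1" by simp
    thus ?thesis unfolding of_real_sum[symmetric] by (simp only: of_real_eq_1_iff)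
  qed
  define b where "b \<alpha> k = pr \<alpha> k - 1 / real M" for \<alpha> k
  have Mpos: "real M > 0" using M2 by simp
  have sum_b: "(\<Sum>k<M. b \<alpha> k) = 0" if a: "\<alpha> < N" for \<alpha>
    unfolding b_def sum_subtractf sum_p[OF a] using Mpos by simp
  define bq where "bq q = b (fst q) (snd q)" for q
  define F where "F q i j = E (fst q) (snd q) $$ (i,j)" for q i j
  define Y where "Y i j = (\<Sum>q\<in>I. complex_of_real (bq q) * F q i j)" for i j
  define X where "X i j = \<rho> $$ (i,j) - (if i = j then complex_of_real (1 / real d) else 0)" for i j
  have EX: "(\<Sum>i<d. \<Sum>j<d. F q i j * X j i) = complex_of_real (bq q)" if q: "q \<in> I" for q
  proof -
    obtain \<alpha> k where qak: "q = (\<alpha>,k)" and a: "\<alpha> < N" and k: "k < M" using q unfolding I_def by auto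
    have "(\<Sum>i<d. \<Sum>j<d. F q i j * X j i) = (\<Sum>i<d. (\<Sum>j<d. E \<alpha> k $$ (i,j) * \<rho> $$ (j,i)) - E \<alpha> k $$ (i,i) * complex_of_real (1 / real d))"
    proof (rule sum.cong, simp)
      fix i assume "i \<in> {..<d}" hence i: "i < d" by simp
      have "(\<Sum>j<d. F q i j * X j i) = (\<Sum>j<d. E \<alpha> k $$ (i,j) * \<rho> $$ (j,i) - (if j = i then E \<alpha> k $$ (i,i) * complex_of_real (1 / real d) else 0))"
        by (rule sum.cong, simp, simp add: F_def X_def qak right_diff_distrib)
      also have "\<dots> = (\<Sum>j<d. E \<alpha> k $$ (i,j) * \<rho> $$ (j,i)) - E \<alpha> k $$ (i,i) * complex_of_real (1 / real d)"
        unfolding sum_subtractf using i by simp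
      finally show "(\<Sum>j<d. F q i j * X j i) = (\<Sum>j<d. E \<alpha> k $$ (i,j) * \<rho> $$ (j,i)) - E \<alpha> k $$ (i,i) * complex_of_real (1 / real d)" .
    qed
    also have "\<dots> = p \<alpha> k - trace_mat (E \<alpha> k) * complex_of_real (1 / real d)"
      unfolding sum_subtractf pdef[OF a k] sum_distrib_right[symmetric] trace_mat_def using Ec[OF a k] by simp
    also have "\<dots> = complex_of_real (pr \<alpha> k - 1 / real M)"
    proof -
      have t: "trace_mat (E \<alpha> k) * complex_of_real (1 / real d) = complex_of_real (1 / real M)"
        using trE a k d0 by (simp add: field_simps)
      have e: "complex_of_real (Re (p \<alpha> k)) = p \<alpha> k" using preal[OF a k] by simp
      show ?thesis unfolding t pr_def of_real_diff e ..
    qed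
    finally show ?thesis unfolding bq_def b_def qak by simp
  qed
  define S where "S = (\<Sum>q\<in>I. (bq q)^2)"
  have YX: "(\<Sum>i<d. \<Sum>j<d. Y i j * X j i) = complex_of_real S"
  proof -
    have "(\<Sum>i<d. \<Sum>j<d. Y i j * X j i) = (\<Sum>q\<in>I. complex_of_real (bq q) * (\<Sum>i<d. \<Sum>j<d. F q i j * X j i))"
      unfolding Y_def by (rule lin1)
    also have "\<dots> = (\<Sum>q\<in>I. complex_of_real ((bq q)^2))"
      by (rule sum.cong, simp, simp add: EX power2_eq_square)
    finally show ?thesis unfolding S_def of_real_sum .
  qed
  define q0 where "q0 = (real d - real M * x) / (real M * (real M - 1))"
  define Tr where "Tr q q' = (if fst q' = fst q then (if snd q' = snd q then x else q0) else real d / real M ^ 2)" for q q' :: "nat \<times> nat"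
  have TrF: "(\<Sum>i<d. \<Sum>j<d. F q i j * F q' j i) = complex_of_real (Tr q q')" if q: "q \<in> I" and q': "q' \<in> I" for q q'
  proof -
    obtain \<alpha> k where qak: "q = (\<alpha>,k)" and a: "\<alpha> < N" and k: "k < M" using q unfolding I_def by auto
    obtain \<beta> l where qbl: "q' = (\<beta>,l)" and b: "\<beta> < N" and l: "l < M" using q' unfolding I_def by auto
    have "(\<Sum>i<d. \<Sum>j<d. F q i j * F q' j i) = trace_mat (E \<alpha> k * E \<beta> l)"
      unfolding tr_mult[OF Ec[OF a k] Ec[OF b l]] F_def qak qbl by simp
    also have "\<dots> = complex_of_real (Tr q q')" unfolding Tr_def qak qbl q0_def
      using trEE trEkl trEab a b k l by auto
    finally show ?thesis .
  qed
  have inner: "(\<Sum>q'\<in>I. bq q' * Tr q q') = (x - q0) * bq q" if q: "q \<in> I" for q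
  proof -
    obtain \<alpha> k where qak: "q = (\<alpha>,k)" and a: "\<alpha> < N" and k: "k < M" using q unfolding I_def by auto
    have "(\<Sum>q'\<in>I. bq q' * Tr q q') = (\<Sum>\<beta><N. \<Sum>l<M. b \<beta> l * Tr q (\<beta>,l))"
      unfolding I_def bq_def using pair_sum[of "\<lambda>\<beta> l. b \<beta> l * Tr q (\<beta>,l)" N M] by simp
    also have "\<dots> = (\<Sum>\<beta><N. if \<beta> = \<alpha> then (x - q0) * b \<alpha> k else 0)"
    proof (rule sum.cong, simp)
      fix \<beta> assume "\<beta> \<in> {..<N}" hence b: "\<beta> < N" by simp
      show "(\<Sum>l<M. b \<beta> l * Tr q (\<beta>,l)) = (if \<beta> = \<alpha> then (x - q0) * b \<alpha> k else 0)"
      proof (cases "\<beta> = \<alpha>")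
        case True
        have "(\<Sum>l<M. b \<beta> l * Tr q (\<beta>,l)) = (\<Sum>l<M. q0 * b \<alpha> l + (if l = k then (x - q0) * b \<alpha> k else 0))"
          by (rule sum.cong, simp, simp add: Tr_def qak True algebra_simps)
        also have "\<dots> = (x - q0) * b \<alpha> k" unfolding sum.distrib sum_distrib_left[symmetric] sum_b[OF a] using k by simp
        finally show ?thesis using True by simp
      next
        case False
        have "(\<Sum>l<M. b \<beta> l * Tr q (\<beta>,l)) = (\<Sum>l<M. b \<beta> l) * (real d / real M ^ 2)"
          unfolding sum_distrib_right by (rule sum.cong, simp, simp add: Tr_def qak False)
        thus ?thesis using False sum_b[OF b] by simp
      qed
    qed
    also have "\<dots> = (x - q0) * bq q" using a unfolding bq_def qak by simp
    finally show ?thesis .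
  qed
  have YY: "(\<Sum>i<d. \<Sum>j<d. Y i j * Y j i) = complex_of_real ((x - q0) * S)"
  proof -
    have "(\<Sum>i<d. \<Sum>j<d. Y i j * Y j i) = (\<Sum>q\<in>I. \<Sum>q'\<in>I. complex_of_real (bq q) * complex_of_real (bq q') * (\<Sum>i<d. \<Sum>j<d. F q i j * F q' j i))"
      unfolding Y_def by (rule bilin)
    also have "\<dots> = (\<Sum>q\<in>I. complex_of_real (bq q * (\<Sum>q'\<in>I. bq q' * Tr q q')))"
      by (rule sum.cong, simp, simp add: TrF sum_distrib_left mult_ac)
    also have "\<dots> = (\<Sum>q\<in>I. complex_of_real ((x - q0) * (bq q)^2))"
      by (rule sum.cong, simp, simp add: inner power2_eq_square mult_ac)
    finally show ?thesis unfolding S_def sum_distrib_left of_real_sum .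
  qed
  have Yh: "Y j i = cnj (Y i j)" if i: "i < d" and j: "j < d" for i j
    unfolding Y_def cnj_sum
  proof (rule sum.cong, simp)
    fix q assume q: "q \<in> I"
    obtain \<alpha> k where qak: "q = (\<alpha>,k)" and a: "\<alpha> < N" and k: "k < M" using q unfolding I_def by auto
    show "complex_of_real (bq q) * F q j i = cnj (complex_of_real (bq q) * F q i j)"
      unfolding F_def qak using hermitian_entry[OF hE[OF a k] Ec[OF a k] i j] by simp
  qed
  have Xh: "X j i = cnj (X i j)" if i: "i < d" and j: "j < d" for i j
    unfolding X_def using hermitian_entry[OF hr rc i j] by auto
  have normY: "(\<Sum>i<d. \<Sum>j<d. (cmod (Y i j))^2) = (x - q0) * S"
  proof -
    have "complex_of_real (\<Sum>i<d. \<Sum>j<d. (cmod (Y i j))^2) = (\<Sum>i<d. \<Sum>j<d. Y i j * Y j i)"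
      unfolding of_real_sum
    proof (rule sum.cong, simp, rule sum.cong, simp)
      fix i j assume "i \<in> {..<d}" "j \<in> {..<d}" hence i: "i < d" and j: "j < d" by auto
      show "complex_of_real ((cmod (Y i j))^2) = Y i j * Y j i" unfolding Yh[OF i j] by (rule complex_norm_square)
    qed
    thus ?thesis unfolding YY by (simp only: of_real_eq_iff)
  qed
  define Q where "Q = (\<Sum>i<d. \<Sum>j<d. (cmod (\<rho> $$ (i,j)))^2) - 1 / real d"
  have normX: "(\<Sum>i<d. \<Sum>j<d. (cmod (X i j))^2) = Q"
  proof -
    have "(\<Sum>i<d. \<Sum>j<d. (cmod (X i j))^2) = (\<Sum>i<d. (\<Sum>j<d. (cmod (\<rho> $$ (i,j)))^2) + (1 / (real d)^2 - 2 / real d * Re (\<rho> $$ (i,i))))"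
    proof (rule sum.cong, simp)
      fix i assume "i \<in> {..<d}" hence i: "i < d" by simp
      have "(\<Sum>j<d. (cmod (X i j))^2) = (\<Sum>j<d. (cmod (\<rho> $$ (i,j)))^2 + (if j = i then 1 / (real d)^2 - 2 / real d * Re (\<rho> $$ (i,i)) else 0))"
      proof (rule sum.cong, simp)
        fix j assume "j \<in> {..<d}"
        show "(cmod (X i j))^2 = (cmod (\<rho> $$ (i,j)))^2 + (if j = i then 1 / (real d)^2 - 2 / real d * Re (\<rho> $$ (i,i)) else 0)"
        proof (cases "j = i")
          case True
          have e: "X i i = \<rho> $$ (i,i) - complex_of_real (1 / real d)" unfolding X_def by simp
          have "(cmod (X i i))^2 = (cmod (\<rho> $$ (i,i)))^2 - 2 * (1 / real d) * Re (\<rho> $$ (i,i)) + (1 / real d)^2"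
            unfolding e by (rule cmod_sub_real)
          thus ?thesis using True by (simp add: power_divide algebra_simps)
        qed (simp add: X_def)
      qed
      also have "\<dots> = (\<Sum>j<d. (cmod (\<rho> $$ (i,j)))^2) + (1 / (real d)^2 - 2 / real d * Re (\<rho> $$ (i,i)))"
        unfolding sum.distrib using i by simp
      finally show "(\<Sum>j<d. (cmod (X i j))^2) = (\<Sum>j<d. (cmod (\<rho> $$ (i,j)))^2) + (1 / (real d)^2 - 2 / real d * Re (\<rho> $$ (i,i)))" .
    qed
    also have "\<dots> = (\<Sum>i<d. \<Sum>j<d. (cmod (\<rho> $$ (i,j)))^2) + (real d / (real d)^2 - 2 / real d * (\<Sum>i<d. Re (\<rho> $$ (i,i))))"
      unfolding sum.distrib sum_subtractf sum_distrib_left by simp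
    also have "(\<Sum>i<d. Re (\<rho> $$ (i,i))) = 1" using trr rc unfolding trace_mat_def Re_sum[symmetric] by simp
    finally show ?thesis unfolding Q_def using d0 by (simp add: power2_eq_square field_simps)
  qed
  have CS: "cmod (\<Sum>i<d. \<Sum>j<d. Y i j * X j i) \<le> sqrt ((x - q0) * S) * sqrt Q"
  proof -
    have "(\<Sum>i<d. \<Sum>j<d. Y i j * X j i) = (\<Sum>(i,j)\<in>{..<d} \<times> {..<d}. cnj (cnj (Y i j)) * X j i)"
      by (simp add: sum.cartesian_product)
    also have "\<dots> = (\<Sum>ij\<in>{..<d} \<times> {..<d}. cnj ((\<lambda>(i,j). cnj (Y i j)) ij) * (\<lambda>(i,j). X j i) ij)"
      by (rule sum.cong, auto)
    finally have e1: "(\<Sum>i<d. \<Sum>j<d. Y i j * X j i) = (\<Sum>ij\<in>{..<d} \<times> {..<d}. cnj ((\<lambda>(i,j). cnj (Y i j)) ij) * (\<lambda>(i,j). X j i) ij)" .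
    have e2: "(\<Sum>ij\<in>{..<d} \<times> {..<d}. (cmod ((\<lambda>(i,j). cnj (Y i j)) ij))^2) = (x - q0) * S"
      unfolding normY[symmetric] sum.cartesian_product by (rule sum.cong, auto)
    have e3: "(\<Sum>ij\<in>{..<d} \<times> {..<d}. (cmod ((\<lambda>(i,j). X j i) ij))^2) = Q"
    proof -
      have "(\<Sum>ij\<in>{..<d} \<times> {..<d}. (cmod ((\<lambda>(i,j). X j i) ij))^2) = (\<Sum>i<d. \<Sum>j<d. (cmod (X j i))^2)"
        unfolding sum.cartesian_product by (rule sum.cong, auto)
      also have "\<dots> = (\<Sum>j<d. \<Sum>i<d. (cmod (X j i))^2)" by (rule sum.swap)
      finally show ?thesis unfolding normX .
    qed
    show ?thesis unfolding e1 e2[symmetric] e3[symmetric] by (rule cs_complex)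
  qed
  have S0: "S \<ge> 0" unfolding S_def by (simp add: sum_nonneg)
  have Q0: "Q \<ge> 0" unfolding normX[symmetric] by (simp add: sum_nonneg)
  have Q1: "Q \<le> 1 - 1 / real d" unfolding Q_def using density_frob[OF rho] by simp
  have M1: "real M - 1 > 0" using M2 by simp
  have cdef: "x - q0 = (real M ^ 2 * x - real d) / (real M * (real M - 1))"
    unfolding q0_def using Mpos M1 by (simp add: field_simps power2_eq_square)
  have c0: "x - q0 > 0" unfolding cdef using xl Mpos M1 by (simp add: field_simps)
  have SS: "S \<le> (x - q0) * Q"
  proof (cases "S = 0")
    case True thus ?thesis using c0 Q0 by simp
  next
    case False
    hence Sp: "S > 0" using S0 by simp
    have "S = cmod (\<Sum>i<d. \<Sum>j<d. Y i j * X j i)" unfolding YX using S0 by simp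
    also have "\<dots> \<le> sqrt ((x - q0) * S) * sqrt Q" by (rule CS)
    finally have "S \<le> sqrt ((x - q0) * S) * sqrt Q" .
    hence "S^2 \<le> (sqrt ((x - q0) * S) * sqrt Q)^2" using S0 by (simp add: power_mono)
    also have "\<dots> = ((x - q0) * S) * Q" using c0 S0 Q0 by (simp add: power_mult_distrib)
    finally have "S * S \<le> S * ((x - q0) * Q)" by (simp add: power2_eq_square mult_ac)
    thus ?thesis using Sp by simp
  qed
  have Sb: "S \<le> (x - q0) * (1 - 1 / real d)"
  proof -
    have "(x - q0) * Q \<le> (x - q0) * (1 - 1 / real d)" by (rule mult_left_mono[OF Q1], insert c0, simp)
    thus ?thesis using SS by (rule order_trans[rotated])
  qed
  have sumbq: "(\<Sum>q\<in>I. bq q) = 0" unfolding I_def bq_def pair_sum[of b] using sum_b by simp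
  have "(\<Sum>\<alpha><N. \<Sum>k<M. (cmod (trace_mat (E \<alpha> k * \<rho>)))^2) = (\<Sum>q\<in>I. (bq q + 1 / real M)^2)"
    unfolding I_def bq_def pair_sum[of "\<lambda>a k. (b a k + 1 / real M)^2"]
  proof (rule sum.cong, simp, rule sum.cong, simp)
    fix \<alpha> k assume "\<alpha> \<in> {..<N}" "k \<in> {..<M}" hence a: "\<alpha> < N" and k: "k < M" by auto
    have "cmod (trace_mat (E \<alpha> k * \<rho>)) = \<bar>pr \<alpha> k\<bar>" unfolding pr_def
      using preal[OF a k] unfolding p_def by (metis norm_of_real)
    thus "(cmod (trace_mat (E \<alpha> k * \<rho>)))^2 = (b \<alpha> k + 1 / real M)^2" unfolding b_def by simp
  qed
  also have "\<dots> = S + 2 / real M * (\<Sum>q\<in>I. bq q) + real (card I) / (real M)^2"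
    unfolding S_def by (simp add: power2_eq_square algebra_simps sum.distrib sum_distrib_left sum_divide_distrib[symmetric] sum_distrib_right[symmetric])
  also have "\<dots> = S + real N / real M" unfolding sumbq using Mpos by (simp add: I_def power2_eq_square)
  also have "\<dots> \<le> (x - q0) * (1 - 1 / real d) + real N / real M" using Sb by simp
  also have "\<dots> = K_const d M x"
  proof -
    have d1: "d \<ge> 1" using d0 by simp
    have "real (N * (M - 1)) = real (d^2 - 1)" using IC by simp
    hence NM: "real N * (real M - 1) = real d ^ 2 - 1" using M2 d1 by (simp add: of_nat_diff)
    have dp: "real d > 0" using d0 by simp
    have e1: "(x - q0) * (1 - 1 / real d) + real N / real M =
      ((real M ^ 2 * x - real d) * (real d - 1) + real d * (real N * (real M - 1))) / (real d * real M * (real M - 1))"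
      unfolding cdef using Mpos M1 dp by (simp add: field_simps)
    have e2: "(real M ^ 2 * x - real d) * (real d - 1) + real d * (real d ^ 2 - 1) = (real d - 1) * (real d ^ 2 + real M ^ 2 * x)"
      by (simp add: power2_eq_square algebra_simps)
    show ?thesis unfolding K_const_def e1 NM e2 ..
  qed
  finally show ?thesis .
qed


lemma sum_lessThan_add: "(\<Sum>r<(a::nat) + b. f r) = (\<Sum>r<a. f r) + (\<Sum>r<b. f (a + r))"
  by (induction b, simp_all add: add.assoc)

lemma sum_split_mult: "(\<Sum>r<(m::nat) * n. f r) = (\<Sum>a<m. \<Sum>b<n. f (a * n + b))"
proof (induction m)
  case 0 thus ?case by simp
next
  case (Suc m)
  have "(\<Sum>r<Suc m * n. f r) = (\<Sum>r<m * n + n. f r)" by (simp add: add.commute)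
  also have "\<dots> = (\<Sum>r<m * n. f r) + (\<Sum>b<n. f (m * n + b))" by (rule sum_lessThan_add)
  finally show ?case using Suc by simp
qed

lemma idx2: assumes "k < (n::nat)" shows "(a * n + k) div n = a" "(a * n + k) mod n = k"
  using assms by auto

lemma idx_bound: assumes i: "i < m" and k: "k < (n::nat)" shows "i * n + k < m * n"
proof -
  have "i * n + k < Suc i * n" using k by simp
  also have "Suc i * n \<le> m * n" using i by (intro mult_le_mono1) simp
  finally show ?thesis .
qed

lemma kron_dim[simp]: "dim_row (kron A B) = dim_row A * dim_row B" "dim_col (kron A B) = dim_col A * dim_col B"
  unfolding kron_def by simp_all

lemma kron_carrier: "A \<in> carrier_mat m1 n1 \<Longrightarrow> B \<in> carrier_mat m2 n2 \<Longrightarrow> kron A B \<in> carrier_mat (m1 * m2) (n1 * n2)"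
  unfolding carrier_mat_def by simp

lemma kron_index_gen: "i < dim_row A * dim_row B \<Longrightarrow> j < dim_col A * dim_col B \<Longrightarrow>
  kron A B $$ (i,j) = A $$ (i div dim_row B, j div dim_col B) * B $$ (i mod dim_row B, j mod dim_col B)"
  unfolding kron_def by simp

lemma kron_index: assumes A: "A \<in> carrier_mat m1 n1" and B: "B \<in> carrier_mat m2 n2"
  and i: "i < m1" and k: "k < m2" and j: "j < n1" and l: "l < n2"
  shows "kron A B $$ (i * m2 + k, j * n2 + l) = A $$ (i,j) * B $$ (k,l)"
proof -
  have r: "i * m2 + k < m1 * m2" by (rule idx_bound[OF i k])
  have c: "j * n2 + l < n1 * n2" by (rule idx_bound[OF j l])
  show ?thesis using kron_index_gen[of "i * m2 + k" A B "j * n2 + l"] A B r c k l by (simp add: idx2)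
qed


lemma trace_kron_mult: assumes X: "X \<in> carrier_mat m m" and Z: "Z \<in> carrier_mat m m"
  and Y: "Y \<in> carrier_mat n n" and W: "W \<in> carrier_mat n n"
  shows "trace_mat (kron X Y * kron Z W) = trace_mat (X * Z) * trace_mat (Y * W)"
proof -
  have K1: "kron X Y \<in> carrier_mat (m * n) (m * n)" by (rule kron_carrier[OF X Y])
  have K2: "kron Z W \<in> carrier_mat (m * n) (m * n)" by (rule kron_carrier[OF Z W])
  have "trace_mat (kron X Y * kron Z W) = (\<Sum>r<m * n. \<Sum>s<m * n. kron X Y $$ (r,s) * kron Z W $$ (s,r))"
    by (rule tr_mult[OF K1 K2])
  also have "\<dots> = (\<Sum>a<m. \<Sum>b<n. \<Sum>a'<m. \<Sum>b'<n. (X $$ (a,a') * Z $$ (a',a)) * (Y $$ (b,b') * W $$ (b',b)))"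
    unfolding sum_split_mult
    by (rule sum.cong, simp, rule sum.cong, simp, rule sum.cong, simp, rule sum.cong, simp,
        simp add: kron_index[OF X Y] kron_index[OF Z W] mult_ac)
  also have "\<dots> = (\<Sum>a<m. \<Sum>a'<m. \<Sum>b<n. \<Sum>b'<n. (X $$ (a,a') * Z $$ (a',a)) * (Y $$ (b,b') * W $$ (b',b)))"
    by (rule sum.cong, simp, rule sum.swap)
  also have "\<dots> = (\<Sum>a<m. \<Sum>a'<m. X $$ (a,a') * Z $$ (a',a)) * (\<Sum>b<n. \<Sum>b'<n. Y $$ (b,b') * W $$ (b',b))"
    by (simp only: sum_distrib_left[symmetric] sum_distrib_right[symmetric])
  also have "\<dots> = trace_mat (X * Z) * trace_mat (Y * W)" unfolding tr_mult[OF X Z] tr_mult[OF Y W] ..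
  finally show ?thesis .
qed

lemma trace_kron: assumes X: "X \<in> carrier_mat m m" and Y: "Y \<in> carrier_mat n n"
  shows "trace_mat (kron X Y) = trace_mat X * trace_mat Y"
proof -
  have "trace_mat (kron X Y) = (\<Sum>r<m * n. kron X Y $$ (r,r))" unfolding trace_mat_def using X Y by simp
  also have "\<dots> = (\<Sum>a<m. \<Sum>b<n. X $$ (a,a) * Y $$ (b,b))" unfolding sum_split_mult
    by (rule sum.cong, simp, rule sum.cong, simp, simp add: kron_index[OF X Y])
  also have "\<dots> = trace_mat X * trace_mat Y" unfolding trace_mat_def using X Y by (simp add: sum_product)
  finally show ?thesis .
qed

lemma ptrace_second_entry: "i < d1 \<Longrightarrow> j < d1 \<Longrightarrow> ptrace_second d1 d2 R $$ (i,j) = (\<Sum>k<d2. R $$ (i * d2 + k, j * d2 + k))"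
  unfolding ptrace_second_def ptrace_mid_def by simp

lemma ptrace_first_entry: "i < d2 \<Longrightarrow> j < d2 \<Longrightarrow> ptrace_first d1 d2 R $$ (i,j) = (\<Sum>k<d1. R $$ (k * d2 + i, k * d2 + j))"
  unfolding ptrace_first_def ptrace_mid_def by simp

lemma ptrace_dims[simp]: "dim_row (ptrace_mid d1 d2 d3 R) = d1 * d3" "dim_col (ptrace_mid d1 d2 d3 R) = d1 * d3"
  unfolding ptrace_mid_def by simp_all

lemma ptrace_second_kron: assumes X: "X \<in> carrier_mat d1 d1" and Y: "Y \<in> carrier_mat d2 d2" and i: "i < d1" and j: "j < d1"
  shows "ptrace_second d1 d2 (kron X Y) $$ (i,j) = X $$ (i,j) * trace_mat Y"
  unfolding ptrace_second_entry[OF i j] trace_mat_def sum_distrib_left using Y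
  by (intro sum.cong, simp_all add: kron_index[OF X Y i _ j])

lemma ptrace_first_kron: assumes X: "X \<in> carrier_mat d1 d1" and Y: "Y \<in> carrier_mat d2 d2" and i: "i < d2" and j: "j < d2"
  shows "ptrace_first d1 d2 (kron X Y) $$ (i,j) = trace_mat X * Y $$ (i,j)"
  unfolding ptrace_first_entry[OF i j] trace_mat_def sum_distrib_right using X
  by (intro sum.cong, simp_all add: kron_index[OF X Y _ i _ j])


lemma div_lt: "i < a * (b::nat) \<Longrightarrow> i div b < a" by (simp add: less_mult_imp_div_less)
lemma mod_lt: "i < a * (b::nat) \<Longrightarrow> i mod b < b"
  by (metis mod_less_divisor mult_0_right not_gr_zero not_less_zero)

lemma ptrace_mid_kron3: assumes A: "A \<in> carrier_mat dA dA" and B: "B \<in> carrier_mat dB dB" and C: "C \<in> carrier_mat dC dC"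
  and i: "i < dA * dC" and j: "j < dA * dC"
  shows "ptrace_mid dA dB dC (kron (kron A B) C) $$ (i,j) = trace_mat B * kron A C $$ (i,j)"
proof -
  have AB: "kron A B \<in> carrier_mat (dA * dB) (dA * dB)" by (rule kron_carrier[OF A B])
  have a: "i div dC < dA" and a': "j div dC < dA" using div_lt i j by auto
  have c: "i mod dC < dC" and c': "j mod dC < dC" using mod_lt i j by auto
  have "ptrace_mid dA dB dC (kron (kron A B) C) $$ (i,j) =
     (\<Sum>k<dB. kron (kron A B) C $$ (((i div dC) * dB + k) * dC + i mod dC, ((j div dC) * dB + k) * dC + j mod dC))"
    unfolding ptrace_mid_def using i j by simp
  also have "\<dots> = (\<Sum>k<dB. A $$ (i div dC, j div dC) * B $$ (k,k) * C $$ (i mod dC, j mod dC))"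
  proof (rule sum.cong, simp)
    fix k assume "k \<in> {..<dB}" hence k: "k < dB" by simp
    have r1: "(i div dC) * dB + k < dA * dB" by (rule idx_bound[OF a k])
    have r2: "(j div dC) * dB + k < dA * dB" by (rule idx_bound[OF a' k])
    show "kron (kron A B) C $$ (((i div dC) * dB + k) * dC + i mod dC, ((j div dC) * dB + k) * dC + j mod dC) =
       A $$ (i div dC, j div dC) * B $$ (k,k) * C $$ (i mod dC, j mod dC)"
      unfolding kron_index[OF AB C r1 c r2 c'] kron_index[OF A B a k a' k] ..
  qed
  also have "\<dots> = trace_mat B * kron A C $$ (i,j)"
    unfolding trace_mat_def sum_distrib_left sum_distrib_right using A B C i j
    by (intro sum.cong, simp_all add: kron_index_gen)
  finally show ?thesis .
qed

lemma ptrace_second_kron3: assumes A: "A \<in> carrier_mat dA dA" and B: "B \<in> carrier_mat dB dB" and C: "C \<in> carrier_mat dC dC"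
  and i: "i < dA" and j: "j < dA"
  shows "ptrace_second dA (dB * dC) (kron (kron A B) C) $$ (i,j) = A $$ (i,j) * trace_mat B * trace_mat C"
proof -
  have AB: "kron A B \<in> carrier_mat (dA * dB) (dA * dB)" by (rule kron_carrier[OF A B])
  have "ptrace_second dA (dB * dC) (kron (kron A B) C) $$ (i,j) = (\<Sum>k<dB * dC. kron (kron A B) C $$ (i * (dB * dC) + k, j * (dB * dC) + k))"
    by (rule ptrace_second_entry[OF i j])
  also have "\<dots> = (\<Sum>b<dB. \<Sum>c<dC. A $$ (i,j) * (B $$ (b,b) * C $$ (c,c)))"
    unfolding sum_split_mult
  proof (rule sum.cong, simp, rule sum.cong, simp)
    fix b c assume "b \<in> {..<dB}" "c \<in> {..<dC}" hence b: "b < dB" and c: "c < dC" by auto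
    have e1: "i * (dB * dC) + (b * dC + c) = (i * dB + b) * dC + c" by (simp add: algebra_simps)
    have e2: "j * (dB * dC) + (b * dC + c) = (j * dB + b) * dC + c" by (simp add: algebra_simps)
    show "kron (kron A B) C $$ (i * (dB * dC) + (b * dC + c), j * (dB * dC) + (b * dC + c)) = A $$ (i,j) * (B $$ (b,b) * C $$ (c,c))"
      unfolding e1 e2 kron_index[OF AB C idx_bound[OF i b] c idx_bound[OF j b] c] kron_index[OF A B i b j b] by simp
  qed
  also have "\<dots> = A $$ (i,j) * ((\<Sum>b<dB. B $$ (b,b)) * (\<Sum>c<dC. C $$ (c,c)))"
    by (subst sum_product, simp only: sum_distrib_left)
  also have "\<dots> = A $$ (i,j) * trace_mat B * trace_mat C"
    unfolding trace_mat_def using B C by (simp add: mult.assoc)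
  finally show ?thesis .
qed

lemma ptrace_first_kron3: assumes A: "A \<in> carrier_mat dA dA" and B: "B \<in> carrier_mat dB dB" and C: "C \<in> carrier_mat dC dC"
  and i: "i < dB * dC" and j: "j < dB * dC"
  shows "ptrace_first dA (dB * dC) (kron (kron A B) C) $$ (i,j) = trace_mat A * kron B C $$ (i,j)"
proof -
  have AB: "kron A B \<in> carrier_mat (dA * dB) (dA * dB)" by (rule kron_carrier[OF A B])
  have b: "i div dC < dB" and b': "j div dC < dB" using div_lt i j by auto
  have c: "i mod dC < dC" and c': "j mod dC < dC" using mod_lt i j by auto
  have "ptrace_first dA (dB * dC) (kron (kron A B) C) $$ (i,j) = (\<Sum>k<dA. kron (kron A B) C $$ (k * (dB * dC) + i, k * (dB * dC) + j))"
    by (rule ptrace_first_entry[OF i j])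
  also have "\<dots> = (\<Sum>k<dA. A $$ (k,k) * (B $$ (i div dC, j div dC) * C $$ (i mod dC, j mod dC)))"
  proof (rule sum.cong, simp)
    fix k assume "k \<in> {..<dA}" hence k: "k < dA" by simp
    have e1: "k * (dB * dC) + i = (k * dB + i div dC) * dC + i mod dC"
      by (simp add: algebra_simps)
    have e2: "k * (dB * dC) + j = (k * dB + j div dC) * dC + j mod dC"
      by (simp add: algebra_simps)
    show "kron (kron A B) C $$ (k * (dB * dC) + i, k * (dB * dC) + j) = A $$ (k,k) * (B $$ (i div dC, j div dC) * C $$ (i mod dC, j mod dC))"
      unfolding e1 e2 kron_index[OF AB C idx_bound[OF k b] c idx_bound[OF k b'] c'] kron_index[OF A B k b k b'] by simp
  qed
  also have "\<dots> = trace_mat A * kron B C $$ (i,j)"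
    unfolding trace_mat_def sum_distrib_right using A B C i j by (simp add: kron_index_gen)
  finally show ?thesis .
qed

lemma ptrace_mix: assumes mix: "\<And>r c. r < d1 * d2 * d3 \<Longrightarrow> c < d1 * d2 * d3 \<Longrightarrow> \<rho> $$ (r,c) = (\<Sum>t<K. complex_of_real (p t) * R t $$ (r,c))"
  and i: "i < d1 * d3" and j: "j < d1 * d3"
  shows "ptrace_mid d1 d2 d3 \<rho> $$ (i,j) = (\<Sum>t<K. complex_of_real (p t) * ptrace_mid d1 d2 d3 (R t) $$ (i,j))"
proof -
  have a: "i div d3 < d1" and a': "j div d3 < d1" using div_lt i j by auto
  have c: "i mod d3 < d3" and c': "j mod d3 < d3" using mod_lt i j by auto
  have "ptrace_mid d1 d2 d3 \<rho> $$ (i,j) = (\<Sum>k<d2. \<rho> $$ (((i div d3) * d2 + k) * d3 + i mod d3, ((j div d3) * d2 + k) * d3 + j mod d3))"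
    unfolding ptrace_mid_def using i j by simp
  also have "\<dots> = (\<Sum>k<d2. \<Sum>t<K. complex_of_real (p t) * R t $$ (((i div d3) * d2 + k) * d3 + i mod d3, ((j div d3) * d2 + k) * d3 + j mod d3))"
  proof (rule sum.cong, simp)
    fix k assume "k \<in> {..<d2}" hence k: "k < d2" by simp
    show "\<rho> $$ (((i div d3) * d2 + k) * d3 + i mod d3, ((j div d3) * d2 + k) * d3 + j mod d3) =
      (\<Sum>t<K. complex_of_real (p t) * R t $$ (((i div d3) * d2 + k) * d3 + i mod d3, ((j div d3) * d2 + k) * d3 + j mod d3))"
      by (rule mix, rule idx_bound[OF idx_bound[OF a k] c], rule idx_bound[OF idx_bound[OF a' k] c'])
  qed
  also have "\<dots> = (\<Sum>t<K. complex_of_real (p t) * ptrace_mid d1 d2 d3 (R t) $$ (i,j))"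
    unfolding ptrace_mid_def using i j by (subst sum.swap, simp add: sum_distrib_left)
  finally show ?thesis .
qed

lemma trace_mix: assumes X: "X \<in> carrier_mat D D" and rc: "\<rho> \<in> carrier_mat D D" and R: "\<And>t. t < K \<Longrightarrow> R t \<in> carrier_mat D D"
  and mix: "\<And>r c. r < D \<Longrightarrow> c < D \<Longrightarrow> \<rho> $$ (r,c) = (\<Sum>t<K. complex_of_real (p t) * R t $$ (r,c))"
  shows "trace_mat (X * \<rho>) = (\<Sum>t<K. complex_of_real (p t) * trace_mat (X * R t))"
proof -
  have "trace_mat (X * \<rho>) = (\<Sum>i<D. \<Sum>j<D. X $$ (i,j) * \<rho> $$ (j,i))" by (rule tr_mult[OF X rc])
  also have "\<dots> = (\<Sum>i<D. \<Sum>j<D. \<Sum>t<K. complex_of_real (p t) * (X $$ (i,j) * R t $$ (j,i)))"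
    by (rule sum.cong, simp, rule sum.cong, simp, simp add: mix sum_distrib_left mult_ac)
  also have "\<dots> = (\<Sum>t<K. \<Sum>i<D. \<Sum>j<D. complex_of_real (p t) * (X $$ (i,j) * R t $$ (j,i)))" by (rule swap3)
  also have "\<dots> = (\<Sum>t<K. complex_of_real (p t) * trace_mat (X * R t))"
    by (rule sum.cong, simp, simp add: tr_mult[OF X R] sum_distrib_left)
  finally show ?thesis .
qed


lemma idx4: fixes \<beta> :: nat assumes j: "j < (M1::nat)" and g: "g < N2" and n: "n < M2"
  defines "c \<equiv> ((\<beta> * M1 + j) * N2 + g) * M2 + n"
  shows "c div (M1 * N2 * M2) = \<beta>" "(c div (N2 * M2)) mod M1 = j" "(c div M2) mod N2 = g" "c mod M2 = n"
proof -
  have c1: "c div M2 = (\<beta> * M1 + j) * N2 + g" unfolding c_def using n by simp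
  show "c mod M2 = n" unfolding c_def using n by simp
  show "(c div M2) mod N2 = g" unfolding c1 using g by simp
  have c2: "c div (N2 * M2) = \<beta> * M1 + j"
    by (simp only: mult.commute[of N2 M2] div_mult2_eq c1, insert g, simp)
  show "(c div (N2 * M2)) mod M1 = j" unfolding c2 using j by simp
  have "c div (M1 * N2 * M2) = c div M2 div N2 div M1"
    by (simp only: div_mult2_eq[symmetric] mult_ac)
  also have "\<dots> = \<beta>" unfolding c1 using g j by simp
  finally show "c div (M1 * N2 * M2) = \<beta>" .
qed

lemma sum4: "(\<Sum>c<(N1::nat) * M1 * N2 * M2. f c) = (\<Sum>\<beta><N1. \<Sum>j<M1. \<Sum>g<N2. \<Sum>n<M2. f (((\<beta> * M1 + j) * N2 + g) * M2 + n))"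
  by (simp only: sum_split_mult)

definition tv :: "nat \<Rightarrow> (nat \<Rightarrow> nat \<Rightarrow> complex mat) \<Rightarrow> complex mat \<Rightarrow> nat \<Rightarrow> complex" where
  "tv M E R r = trace_mat (E (r div M) (r mod M) * R)"

definition sv :: "nat \<Rightarrow> (nat \<Rightarrow> nat \<Rightarrow> complex mat) \<Rightarrow> complex mat \<Rightarrow> nat \<Rightarrow> nat \<Rightarrow> (nat \<Rightarrow> nat \<Rightarrow> complex mat) \<Rightarrow> complex mat \<Rightarrow> nat \<Rightarrow> complex" where
  "sv M1 E1 R1 N2 M2 E2 R2 c = trace_mat (E1 (c div (M1 * N2 * M2)) ((c div (N2 * M2)) mod M1) * R1) *
      trace_mat (E2 ((c div M2) mod N2) (c mod M2) * R2)"

lemma norm_tv: assumes P: "IC_NM_POVM d N M x E" and R: "density_mat d R"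
  shows "(\<Sum>r<N * M. (cmod (tv M E R r))^2) \<le> K_const d M x"
proof -
  have "(\<Sum>r<N * M. (cmod (tv M E R r))^2) = (\<Sum>\<alpha><N. \<Sum>k<M. (cmod (trace_mat (E \<alpha> k * R)))^2)"
    unfolding sum_split_mult tv_def by (rule sum.cong, simp, rule sum.cong, simp, simp)
  also have "\<dots> \<le> K_const d M x" by (rule povm_bound[OF P R])
  finally show ?thesis .
qed

lemma K_nonneg: assumes P: "IC_NM_POVM d N M x E" and R: "density_mat d R" shows "K_const d M x \<ge> 0"
  using norm_tv[OF P R] by (meson order_trans sum_nonneg zero_le_power2)

lemma norm_sv: assumes P1: "IC_NM_POVM d1 N1 M1 x1 E1" and R1: "density_mat d1 R1"
  and P2: "IC_NM_POVM d2 N2 M2 x2 E2" and R2: "density_mat d2 R2"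
  shows "(\<Sum>c<N1 * M1 * N2 * M2. (cmod (sv M1 E1 R1 N2 M2 E2 R2 c))^2) \<le> K_const d1 M1 x1 * K_const d2 M2 x2"
proof -
  define a where "a \<beta> j = (cmod (trace_mat (E1 \<beta> j * R1)))^2" for \<beta> j
  define b where "b g n = (cmod (trace_mat (E2 g n * R2)))^2" for g n
  define T where "T = (\<Sum>g<N2. \<Sum>n<M2. b g n)"
  have "(\<Sum>c<N1 * M1 * N2 * M2. (cmod (sv M1 E1 R1 N2 M2 E2 R2 c))^2) = (\<Sum>\<beta><N1. \<Sum>j<M1. \<Sum>g<N2. \<Sum>n<M2. a \<beta> j * b g n)"
    unfolding sum4
  proof (rule sum.cong, simp, rule sum.cong, simp, rule sum.cong, simp, rule sum.cong, simp)
    fix \<beta> j g n assume "\<beta> \<in> {..<N1}" "j \<in> {..<M1}" "g \<in> {..<N2}" "n \<in> {..<M2}"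
    hence j: "j < M1" and g: "g < N2" and n: "n < M2" by auto
    show "(cmod (sv M1 E1 R1 N2 M2 E2 R2 (((\<beta> * M1 + j) * N2 + g) * M2 + n)))^2 = a \<beta> j * b g n"
      unfolding sv_def idx4[OF j g n] a_def b_def by (simp add: norm_mult power_mult_distrib)
  qed
  also have "\<dots> = (\<Sum>\<beta><N1. \<Sum>j<M1. a \<beta> j * T)" unfolding T_def by (simp only: sum_distrib_left)
  also have "\<dots> = (\<Sum>\<beta><N1. \<Sum>j<M1. a \<beta> j) * T" by (simp only: sum_distrib_right)
  also have "\<dots> \<le> K_const d1 M1 x1 * K_const d2 M2 x2"
  proof (rule mult_mono)
    show "(\<Sum>\<beta><N1. \<Sum>j<M1. a \<beta> j) \<le> K_const d1 M1 x1" unfolding a_def by (rule povm_bound[OF P1 R1])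
    show "T \<le> K_const d2 M2 x2" unfolding T_def b_def by (rule povm_bound[OF P2 R2])
    show "0 \<le> K_const d1 M1 x1" by (rule K_nonneg[OF P1 R1])
    show "0 \<le> T" unfolding T_def b_def by (simp add: sum_nonneg)
  qed
  finally show ?thesis .
qed


lemma ones_dim[simp]: "dim_row (ones_mat l) = l" "dim_col (ones_mat l) = l" unfolding ones_mat_def by simp_all
lemma omega_dim[simp]: "dim_row (omega l V) = dim_vec V" "dim_col (omega l V) = l" unfolding omega_def by simp_all
lemma ones_index: "i < l \<Longrightarrow> j < l \<Longrightarrow> ones_mat l $$ (i,j) = 1" unfolding ones_mat_def by simp
lemma omega_index: "i < dim_vec V \<Longrightarrow> j < l \<Longrightarrow> omega l V $$ (i,j) = V $ i" unfolding omega_def by simp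

lemma script_M_carrier: "dim_vec \<tau> = n1 \<Longrightarrow> dim_vec \<sigma> = n2 \<Longrightarrow> P \<in> carrier_mat n1 n2 \<Longrightarrow>
  script_M l \<mu> \<nu> \<tau> \<sigma> P \<in> carrier_mat (l + n1) (l + n2)"
  unfolding script_M_def carrier_mat_def by simp

lemma script_M_entry: assumes dt: "dim_vec \<tau> = n1" and ds: "dim_vec \<sigma> = n2" and Pc: "P \<in> carrier_mat n1 n2"
  and r: "r < l + n1" and c: "c < l + n2"
  shows "script_M l \<mu> \<nu> \<tau> \<sigma> P $$ (r,c) = (if r < l then if c < l then complex_of_real (\<mu> * \<nu>) else complex_of_real \<mu> * \<sigma> $ (c - l)
       else if c < l then complex_of_real \<nu> * \<tau> $ (r - l) else P $$ (r - l, c - l))"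
proof -
  have r': "r < dim_row (complex_of_real (\<mu> * \<nu>) \<cdot>\<^sub>m ones_mat l) + dim_row P" using r Pc by simp
  have c': "c < dim_col (complex_of_real (\<mu> * \<nu>) \<cdot>\<^sub>m ones_mat l) + dim_col P" using c Pc by simp
  show ?thesis unfolding script_M_def index_mat_four_block(1)[OF r' c']
    using r c dt ds Pc by (simp add: ones_index omega_index)
qed


lemma script_M_bound:
  fixes \<tau> \<sigma> :: "complex vec" and P :: "complex mat" and p :: "nat \<Rightarrow> real" and ta sb :: "nat \<Rightarrow> nat \<Rightarrow> complex"
  assumes dt: "dim_vec \<tau> = n1" and ds: "dim_vec \<sigma> = n2" and Pc: "P \<in> carrier_mat n1 n2"
  and p: "\<And>t. t < K \<Longrightarrow> p t \<ge> 0" and p1: "(\<Sum>t<K. p t) = 1"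
  and te: "\<And>r. r < n1 \<Longrightarrow> \<tau> $ r = (\<Sum>t<K. complex_of_real (p t) * ta t r)"
  and se: "\<And>c. c < n2 \<Longrightarrow> \<sigma> $ c = (\<Sum>t<K. complex_of_real (p t) * sb t c)"
  and Pe: "\<And>r c. r < n1 \<Longrightarrow> c < n2 \<Longrightarrow> P $$ (r,c) = (\<Sum>t<K. complex_of_real (p t) * (ta t r * sb t c))"
  and tan: "\<And>t. t < K \<Longrightarrow> (\<Sum>r<n1. (cmod (ta t r))^2) \<le> KX"
  and sbn: "\<And>t. t < K \<Longrightarrow> (\<Sum>c<n2. (cmod (sb t c))^2) \<le> KY"
  shows "trace_norm (script_M l \<mu> \<nu> \<tau> \<sigma> P) \<le> sqrt ((real l * \<mu>^2 + KX) * (real l * \<nu>^2 + KY))"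
proof -
  define G where "G = script_M l \<mu> \<nu> \<tau> \<sigma> P"
  have Gc: "G \<in> carrier_mat (l + n1) (l + n2)" unfolding G_def by (rule script_M_carrier[OF dt ds Pc])
  define a where "a t r = (if r < l then complex_of_real \<mu> else ta t (r - l))" for t r
  define b where "b t c = (if c < l then complex_of_real \<nu> else sb t (c - l))" for t c
  have pc: "(\<Sum>t<K. complex_of_real (p t)) = 1" using p1 by (simp only: of_real_sum[symmetric]) simp
  have Ge: "G $$ (r,c) = (\<Sum>t<K. complex_of_real (p t) * (a t r * b t c))" if r: "r < l + n1" and c: "c < l + n2" for r c
  proof -
    have e: "G $$ (r,c) = (if r < l then if c < l then complex_of_real (\<mu> * \<nu>) else complex_of_real \<mu> * \<sigma> $ (c - l)
       else if c < l then complex_of_real \<nu> * \<tau> $ (r - l) else P $$ (r - l, c - l))"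
      unfolding G_def by (rule script_M_entry[OF dt ds Pc r c])
    show ?thesis
    proof (cases "r < l")
      case True note rl = this
      show ?thesis
      proof (cases "c < l")
        case True
        have "(\<Sum>t<K. complex_of_real (p t) * (a t r * b t c)) = (\<Sum>t<K. complex_of_real (p t)) * complex_of_real (\<mu> * \<nu>)"
          unfolding a_def b_def sum_distrib_right using rl True by simp
        thus ?thesis unfolding e pc using rl True by simp
      next
        case False
        have "(\<Sum>t<K. complex_of_real (p t) * (a t r * b t c)) = complex_of_real \<mu> * (\<Sum>t<K. complex_of_real (p t) * sb t (c - l))"
          unfolding a_def b_def sum_distrib_left using rl False by (simp add: mult_ac)
        moreover have "\<sigma> $ (c - l) = (\<Sum>t<K. complex_of_real (p t) * sb t (c - l))" using se False c by simp
        ultimately show ?thesis unfolding e using rl False by simp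
      qed
    next
      case False note rl = this
      show ?thesis
      proof (cases "c < l")
        case True
        have "(\<Sum>t<K. complex_of_real (p t) * (a t r * b t c)) = complex_of_real \<nu> * (\<Sum>t<K. complex_of_real (p t) * ta t (r - l))"
          unfolding a_def b_def sum_distrib_left using rl True by (simp add: mult_ac)
        moreover have "\<tau> $ (r - l) = (\<Sum>t<K. complex_of_real (p t) * ta t (r - l))" using te rl r by simp
        ultimately show ?thesis unfolding e using rl True by simp
      next
        case False
        have "(\<Sum>t<K. complex_of_real (p t) * (a t r * b t c)) = (\<Sum>t<K. complex_of_real (p t) * (ta t (r - l) * sb t (c - l)))"
          unfolding a_def b_def using rl False by simp
        moreover have "P $$ (r - l, c - l) = (\<Sum>t<K. complex_of_real (p t) * (ta t (r - l) * sb t (c - l)))"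
          using Pe rl False r c by simp
        ultimately show ?thesis unfolding e using rl False by simp
      qed
    qed
  qed
  have K0: "0 < K" using p1 by (cases K, auto)
  have KX0: "KX \<ge> 0" using tan[OF K0] by (meson order_trans sum_nonneg zero_le_power2)
  have "trace_norm G \<le> (\<Sum>t<K. p t * (sqrt (\<Sum>r<l + n1. (cmod (a t r))^2) * sqrt (\<Sum>c<l + n2. (cmod (b t c))^2)))"
    by (rule trace_norm_bound[OF Gc p Ge])
  also have "\<dots> \<le> (\<Sum>t<K. p t * (sqrt (real l * \<mu>^2 + KX) * sqrt (real l * \<nu>^2 + KY)))"
  proof (rule sum_mono)
    fix t assume "t \<in> {..<K}" hence t: "t < K" by simp
    have A: "(\<Sum>r<l + n1. (cmod (a t r))^2) = real l * \<mu>^2 + (\<Sum>r<n1. (cmod (ta t r))^2)"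
      unfolding sum_lessThan_add a_def by simp
    have B: "(\<Sum>c<l + n2. (cmod (b t c))^2) = real l * \<nu>^2 + (\<Sum>c<n2. (cmod (sb t c))^2)"
      unfolding sum_lessThan_add b_def by simp
    have "sqrt (\<Sum>r<l + n1. (cmod (a t r))^2) * sqrt (\<Sum>c<l + n2. (cmod (b t c))^2) \<le>
       sqrt (real l * \<mu>^2 + KX) * sqrt (real l * \<nu>^2 + KY)"
      unfolding A B
    proof (rule mult_mono)
      show "sqrt (real l * \<mu>^2 + (\<Sum>r<n1. (cmod (ta t r))^2)) \<le> sqrt (real l * \<mu>^2 + KX)"
        using tan[OF t] by simp
      show "sqrt (real l * \<nu>^2 + (\<Sum>c<n2. (cmod (sb t c))^2)) \<le> sqrt (real l * \<nu>^2 + KY)"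
        using sbn[OF t] by simp
    qed (insert KX0, simp_all add: sum_nonneg)
    thus "p t * (sqrt (\<Sum>r<l + n1. (cmod (a t r))^2) * sqrt (\<Sum>c<l + n2. (cmod (b t c))^2)) \<le>
       p t * (sqrt (real l * \<mu>^2 + KX) * sqrt (real l * \<nu>^2 + KY))"
      by (rule mult_left_mono[OF _ p[OF t]])
  qed
  also have "\<dots> = sqrt ((real l * \<mu>^2 + KX) * (real l * \<nu>^2 + KY))"
    unfolding sum_distrib_right[symmetric] p1 by (simp add: real_sqrt_mult)
  finally show ?thesis unfolding G_def .
qed


lemma tau_entry: assumes E: "\<And>\<alpha> k. \<alpha> < N \<Longrightarrow> k < M \<Longrightarrow> E \<alpha> k \<in> carrier_mat d d"
  and rc: "\<rho>X \<in> carrier_mat d d" and R: "\<And>t. t < K \<Longrightarrow> R t \<in> carrier_mat d d"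
  and mix: "\<And>r c. r < d \<Longrightarrow> c < d \<Longrightarrow> \<rho>X $$ (r,c) = (\<Sum>t<K. complex_of_real (p t) * R t $$ (r,c))"
  and r: "r < N * M"
  shows "tau_vec N M E \<rho>X $ r = (\<Sum>t<K. complex_of_real (p t) * tv M E (R t) r)"
proof -
  have Ec: "E (r div M) (r mod M) \<in> carrier_mat d d" by (rule E[OF div_lt[OF r] mod_lt[OF r]])
  have "tau_vec N M E \<rho>X $ r = trace_mat (E (r div M) (r mod M) * \<rho>X)" unfolding tau_vec_def using r by simp
  also have "\<dots> = (\<Sum>t<K. complex_of_real (p t) * tv M E (R t) r)"
    unfolding tv_def by (rule trace_mix[OF Ec rc R mix])
  finally show ?thesis .
qed

lemma sigma_entry: assumes E1: "\<And>\<alpha> k. \<alpha> < N1 \<Longrightarrow> k < M1 \<Longrightarrow> E1 \<alpha> k \<in> carrier_mat d1 d1"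
  and E2: "\<And>\<alpha> k. \<alpha> < N2 \<Longrightarrow> k < M2 \<Longrightarrow> E2 \<alpha> k \<in> carrier_mat d2 d2"
  and rc: "\<rho>12 \<in> carrier_mat (d1 * d2) (d1 * d2)"
  and R1: "\<And>t. t < K \<Longrightarrow> R1 t \<in> carrier_mat d1 d1" and R2: "\<And>t. t < K \<Longrightarrow> R2 t \<in> carrier_mat d2 d2"
  and mix: "\<And>r c. r < d1 * d2 \<Longrightarrow> c < d1 * d2 \<Longrightarrow> \<rho>12 $$ (r,c) = (\<Sum>t<K. complex_of_real (p t) * kron (R1 t) (R2 t) $$ (r,c))"
  and c: "c < N1 * M1 * N2 * M2"
  shows "sigma_vec N1 M1 E1 N2 M2 E2 \<rho>12 $ c = (\<Sum>t<K. complex_of_real (p t) * sv M1 E1 (R1 t) N2 M2 E2 (R2 t) c)"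
proof -
  define \<beta> where "\<beta> = c div (M1 * N2 * M2)"
  define j where "j = (c div (N2 * M2)) mod M1"
  define g where "g = (c div M2) mod N2"
  define n where "n = c mod M2"
  have c': "c < N1 * (M1 * N2 * M2)" using c by (simp add: mult.assoc)
  have b: "\<beta> < N1" unfolding \<beta>_def by (rule div_lt[OF c'])
  have M1: "M1 > 0" and N2: "N2 > 0" and M2: "M2 > 0" using c by (auto intro: ccontr)
  have j: "j < M1" unfolding j_def using M1 by simp
  have g: "g < N2" unfolding g_def using N2 by simp
  have n: "n < M2" unfolding n_def using M2 by simp
  have X: "kron (E1 \<beta> j) (E2 g n) \<in> carrier_mat (d1 * d2) (d1 * d2)" by (rule kron_carrier[OF E1[OF b j] E2[OF g n]])
  have R: "\<And>t. t < K \<Longrightarrow> kron (R1 t) (R2 t) \<in> carrier_mat (d1 * d2) (d1 * d2)" using kron_carrier[OF R1 R2] by blast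
  have "sigma_vec N1 M1 E1 N2 M2 E2 \<rho>12 $ c = trace_mat (kron (E1 \<beta> j) (E2 g n) * \<rho>12)"
    unfolding sigma_vec_def \<beta>_def j_def g_def n_def Let_def using c by simp
  also have "\<dots> = (\<Sum>t<K. complex_of_real (p t) * trace_mat (kron (E1 \<beta> j) (E2 g n) * kron (R1 t) (R2 t)))"
    by (rule trace_mix[OF X rc R mix])
  also have "\<dots> = (\<Sum>t<K. complex_of_real (p t) * sv M1 E1 (R1 t) N2 M2 E2 (R2 t) c)"
  proof (rule sum.cong, simp)
    fix t assume "t \<in> {..<K}" hence t: "t < K" by simp
    show "complex_of_real (p t) * trace_mat (kron (E1 \<beta> j) (E2 g n) * kron (R1 t) (R2 t)) =
      complex_of_real (p t) * sv M1 E1 (R1 t) N2 M2 E2 (R2 t) c"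
      by (simp only: trace_kron_mult[OF E1[OF b j] R1[OF t] E2[OF g n] R2[OF t]], simp add: sv_def \<beta>_def j_def g_def n_def)
  qed
  finally show ?thesis .
qed

lemma prob3_entry: assumes EA: "EA \<alpha> k \<in> carrier_mat dA dA" and EB: "EB \<beta> j \<in> carrier_mat dB dB"
  and EC: "EC \<gamma> n \<in> carrier_mat dC dC" and rc: "\<rho> \<in> carrier_mat (dA * dB * dC) (dA * dB * dC)"
  and RA: "\<And>t. t < K \<Longrightarrow> RA t \<in> carrier_mat dA dA" and RB: "\<And>t. t < K \<Longrightarrow> RB t \<in> carrier_mat dB dB"
  and RC: "\<And>t. t < K \<Longrightarrow> RC t \<in> carrier_mat dC dC"
  and mix: "\<And>r c. r < dA * dB * dC \<Longrightarrow> c < dA * dB * dC \<Longrightarrow>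
     \<rho> $$ (r,c) = (\<Sum>t<K. complex_of_real (p t) * kron (kron (RA t) (RB t)) (RC t) $$ (r,c))"
  shows "prob3 EA EB EC \<rho> \<alpha> k \<beta> j \<gamma> n = (\<Sum>t<K. complex_of_real (p t) *
     (trace_mat (EA \<alpha> k * RA t) * trace_mat (EB \<beta> j * RB t) * trace_mat (EC \<gamma> n * RC t)))"
proof -
  have EAB: "kron (EA \<alpha> k) (EB \<beta> j) \<in> carrier_mat (dA * dB) (dA * dB)" by (rule kron_carrier[OF EA EB])
  have X: "kron (kron (EA \<alpha> k) (EB \<beta> j)) (EC \<gamma> n) \<in> carrier_mat (dA * dB * dC) (dA * dB * dC)"
    by (rule kron_carrier[OF EAB EC])
  have RAB: "\<And>t. t < K \<Longrightarrow> kron (RA t) (RB t) \<in> carrier_mat (dA * dB) (dA * dB)" using kron_carrier[OF RA RB] by blast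
  have R: "\<And>t. t < K \<Longrightarrow> kron (kron (RA t) (RB t)) (RC t) \<in> carrier_mat (dA * dB * dC) (dA * dB * dC)"
    using kron_carrier[OF RAB RC] by blast
  have "prob3 EA EB EC \<rho> \<alpha> k \<beta> j \<gamma> n = (\<Sum>t<K. complex_of_real (p t) *
      trace_mat (kron (kron (EA \<alpha> k) (EB \<beta> j)) (EC \<gamma> n) * kron (kron (RA t) (RB t)) (RC t)))"
    unfolding prob3_def by (rule trace_mix[OF X rc R mix])
  also have "\<dots> = (\<Sum>t<K. complex_of_real (p t) *
     (trace_mat (EA \<alpha> k * RA t) * trace_mat (EB \<beta> j * RB t) * trace_mat (EC \<gamma> n * RC t)))"
  proof (rule sum.cong, simp)
    fix t assume "t \<in> {..<K}" hence t: "t < K" by simp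
    show "complex_of_real (p t) * trace_mat (kron (kron (EA \<alpha> k) (EB \<beta> j)) (EC \<gamma> n) * kron (kron (RA t) (RB t)) (RC t)) =
      complex_of_real (p t) * (trace_mat (EA \<alpha> k * RA t) * trace_mat (EB \<beta> j * RB t) * trace_mat (EC \<gamma> n * RC t))"
      by (simp only: trace_kron_mult[OF EAB RAB[OF t] EC RC[OF t]] trace_kron_mult[OF EA RA[OF t] EB RB[OF t]])
  qed
  finally show ?thesis .
qed


lemma povm_carrier: assumes P: "IC_NM_POVM d N M x E" and a: "\<alpha> < N" and k: "k < M"
  shows "E \<alpha> k \<in> carrier_mat d d"
proof -
  have NM: "NM_POVM d N M x E" using P unfolding IC_NM_POVM_def by (rule conjunct1)
  note psdE = NM[unfolded NM_POVM_def, THEN conjunct2, THEN conjunct2, THEN conjunct2, THEN conjunct1]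
  have "psd_mat d (E \<alpha> k)" using psdE a k by simp
  thus ?thesis unfolding psd_mat_def by (rule conjunct1)
qed

lemma idx_bounds4: assumes c: "c < (N1::nat) * M1 * N2 * M2"
  shows "c div (M1 * N2 * M2) < N1" "(c div (N2 * M2)) mod M1 < M1" "(c div M2) mod N2 < N2" "c mod M2 < M2"
proof -
  have c': "c < N1 * (M1 * N2 * M2)" using c by (simp add: mult.assoc)
  show "c div (M1 * N2 * M2) < N1" by (rule div_lt[OF c'])
  have M1: "M1 > 0" and N2: "N2 > 0" and M2: "M2 > 0" using c by (auto intro: ccontr)
  show "(c div (N2 * M2)) mod M1 < M1" using M1 by simp
  show "(c div M2) mod N2 < N2" using N2 by simp
  show "c mod M2 < M2" using M2 by simp
qed

lemma corr_entry: "r < NX * MX \<Longrightarrow> c < NY * MY * NZ * MZ \<Longrightarrow> corr_mat NX MX NY MY NZ MZ f $$ (r,c) =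
   f (r div MX) (r mod MX) (c div (MY * NZ * MZ)) ((c div (NZ * MZ)) mod MY) ((c div MZ) mod NZ) (c mod MZ)"
  unfolding corr_mat_def by simp

lemma corr_carrier: "corr_mat NX MX NY MY NZ MZ f \<in> carrier_mat (NX * MX) (NY * MY * NZ * MZ)"
  unfolding corr_mat_def by simp

lemma density_carrier: "density_mat d R \<Longrightarrow> R \<in> carrier_mat d d"
  unfolding density_mat_def psd_mat_def by (elim conjE)

lemma density_trace: "density_mat d R \<Longrightarrow> trace_mat R = 1"
  unfolding density_mat_def by (elim conjE)

theorem theorem2:
  fixes dA dB dC NA NB NC MA MB MC l :: nat
    and xA xB xC \<mu> \<nu> :: real
    and EA EB EC :: "nat \<Rightarrow> nat \<Rightarrow> complex mat"
    and \<rho> :: "complex mat"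
  defines "KA \<equiv> K_const dA MA xA"
      and "KB \<equiv> K_const dB MB xB"
      and "KC \<equiv> K_const dC MC xC"
      and "\<rho>A \<equiv> ptrace_second dA (dB * dC) \<rho>"
      and "\<rho>B \<equiv> ptrace_first dA dB (ptrace_second (dA * dB) dC \<rho>)"
      and "\<rho>C \<equiv> ptrace_first (dA * dB) dC \<rho>"
      and "\<rho>BC \<equiv> ptrace_first dA (dB * dC) \<rho>"
      and "\<rho>AC \<equiv> ptrace_mid dA dB dC \<rho>"
      and "\<rho>AB \<equiv> ptrace_second (dA * dB) dC \<rho>"
  assumes state: "density_mat (dA * dB * dC) \<rho>"
      and povmA: "IC_NM_POVM dA NA MA xA EA"
      and povmB: "IC_NM_POVM dB NB MB xB EB"
      and povmC: "IC_NM_POVM dC NC MC xC EC"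
      and l_pos: "0 < l"
      and sep: "fully_separable dA dB dC \<rho>"
  shows "trace_norm (script_M l \<mu> \<nu> (tau_vec NA MA EA \<rho>A) (sigma_vec NB MB EB NC MC EC \<rho>BC)
            (P_A_BC NA MA EA NB MB EB NC MC EC \<rho>))
           \<le> sqrt ((real l * \<mu>\<^sup>2 + KA) * (real l * \<nu>\<^sup>2 + KB * KC))
       \<and> trace_norm (script_M l \<mu> \<nu> (tau_vec NB MB EB \<rho>B) (sigma_vec NA MA EA NC MC EC \<rho>AC)
            (P_B_AC NA MA EA NB MB EB NC MC EC \<rho>))
           \<le> sqrt ((real l * \<mu>\<^sup>2 + KB) * (real l * \<nu>\<^sup>2 + KA * KC))
       \<and> trace_norm (script_M l \<mu> \<nu> (tau_vec NC MC EC \<rho>C) (sigma_vec NA MA EA NB MB EB \<rho>AB)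
            (P_C_AB NA MA EA NB MB EB NC MC EC \<rho>))
           \<le> sqrt ((real l * \<mu>\<^sup>2 + KC) * (real l * \<nu>\<^sup>2 + KA * KB))"

proof -
  have ex: "\<exists>K::nat. \<exists>p::nat\<Rightarrow>real. \<exists>RA RB RC. (\<forall>i<K. 0 \<le> p i) \<and> (\<Sum>i<K. p i) = 1
    \<and> (\<forall>i<K. density_mat dA (RA i) \<and> density_mat dB (RB i) \<and> density_mat dC (RC i))
    \<and> \<rho> \<in> carrier_mat (dA * dB * dC) (dA * dB * dC)
    \<and> (\<forall>r < dA * dB * dC. \<forall>c < dA * dB * dC.
           \<rho> $$ (r, c) = (\<Sum>i<K. complex_of_real (p i) * kron (kron (RA i) (RB i)) (RC i) $$ (r, c)))"
    using sep unfolding fully_separable_def apply (elim exE conjE) apply (intro exI conjI) by assumption+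
  then obtain K :: nat and p :: "nat \<Rightarrow> real" and RA RB RC :: "nat \<Rightarrow> complex mat"
    where H: "(\<forall>i<K. 0 \<le> p i) \<and> (\<Sum>i<K. p i) = 1
    \<and> (\<forall>i<K. density_mat dA (RA i) \<and> density_mat dB (RB i) \<and> density_mat dC (RC i))
    \<and> \<rho> \<in> carrier_mat (dA * dB * dC) (dA * dB * dC)
    \<and> (\<forall>r < dA * dB * dC. \<forall>c < dA * dB * dC.
           \<rho> $$ (r, c) = (\<Sum>i<K. complex_of_real (p i) * kron (kron (RA i) (RB i)) (RC i) $$ (r, c)))"
    by (elim exE) (rule that)
  note p = H[THEN conjunct1]
  note p1 = H[THEN conjunct2, THEN conjunct1]
  note dens = H[THEN conjunct2, THEN conjunct2, THEN conjunct1]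
  note rc = H[THEN conjunct2, THEN conjunct2, THEN conjunct2, THEN conjunct1]
  note mix = H[THEN conjunct2, THEN conjunct2, THEN conjunct2, THEN conjunct2]
  have dA': "\<And>t. t < K \<Longrightarrow> density_mat dA (RA t)" and dB': "\<And>t. t < K \<Longrightarrow> density_mat dB (RB t)"
    and dC': "\<And>t. t < K \<Longrightarrow> density_mat dC (RC t)" using dens by auto
  have cA: "\<And>t. t < K \<Longrightarrow> RA t \<in> carrier_mat dA dA" using dA' density_carrier by blast
  have cB: "\<And>t. t < K \<Longrightarrow> RB t \<in> carrier_mat dB dB" using dB' density_carrier by blast
  have cC: "\<And>t. t < K \<Longrightarrow> RC t \<in> carrier_mat dC dC" using dC' density_carrier by blast
  have tA: "\<And>t. t < K \<Longrightarrow> trace_mat (RA t) = 1" using dA' density_trace by blast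
  have tB: "\<And>t. t < K \<Longrightarrow> trace_mat (RB t) = 1" using dB' density_trace by blast
  have tC: "\<And>t. t < K \<Longrightarrow> trace_mat (RC t) = 1" using dC' density_trace by blast
  have cAB: "\<And>t. t < K \<Longrightarrow> kron (RA t) (RB t) \<in> carrier_mat (dA * dB) (dA * dB)" using kron_carrier[OF cA cB] by blast
  have mix': "\<And>r c. r < dA * dB * dC \<Longrightarrow> c < dA * dB * dC \<Longrightarrow>
     \<rho> $$ (r, c) = (\<Sum>i<K. complex_of_real (p i) * kron (kron (RA i) (RB i)) (RC i) $$ (r, c))" using mix by blast
  have mixA: "\<rho>A $$ (i,j) = (\<Sum>t<K. complex_of_real (p t) * RA t $$ (i,j))" if i: "i < dA" and j: "j < dA" for i j
  proof -
    have "\<rho>A $$ (i,j) = (\<Sum>t<K. complex_of_real (p t) * ptrace_mid dA (dB * dC) 1 (kron (kron (RA t) (RB t)) (RC t)) $$ (i,j))"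
      unfolding \<rho>A_def ptrace_second_def by (rule ptrace_mix, rule mix', insert i j, simp_all add: mult.assoc)
    also have "\<dots> = (\<Sum>t<K. complex_of_real (p t) * RA t $$ (i,j))"
    proof (rule sum.cong, simp)
      fix t assume "t \<in> {..<K}" hence t: "t < K" by simp
      show "complex_of_real (p t) * ptrace_mid dA (dB * dC) 1 (kron (kron (RA t) (RB t)) (RC t)) $$ (i,j) = complex_of_real (p t) * RA t $$ (i,j)"
        using ptrace_second_kron3[OF cA[OF t] cB[OF t] cC[OF t] i j] tB[OF t] tC[OF t] unfolding ptrace_second_def by simp
    qed
    finally show ?thesis .
  qed
  have mixBC: "\<rho>BC $$ (i,j) = (\<Sum>t<K. complex_of_real (p t) * kron (RB t) (RC t) $$ (i,j))" if i: "i < dB * dC" and j: "j < dB * dC" for i j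
  proof -
    have "\<rho>BC $$ (i,j) = (\<Sum>t<K. complex_of_real (p t) * ptrace_mid 1 dA (dB * dC) (kron (kron (RA t) (RB t)) (RC t)) $$ (i,j))"
      unfolding \<rho>BC_def ptrace_first_def by (rule ptrace_mix, rule mix', insert i j, simp_all add: mult.assoc)
    also have "\<dots> = (\<Sum>t<K. complex_of_real (p t) * kron (RB t) (RC t) $$ (i,j))"
    proof (rule sum.cong, simp)
      fix t assume "t \<in> {..<K}" hence t: "t < K" by simp
      show "complex_of_real (p t) * ptrace_mid 1 dA (dB * dC) (kron (kron (RA t) (RB t)) (RC t)) $$ (i,j) = complex_of_real (p t) * kron (RB t) (RC t) $$ (i,j)"
        using ptrace_first_kron3[OF cA[OF t] cB[OF t] cC[OF t] i j] tA[OF t] unfolding ptrace_first_def by simp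
    qed
    finally show ?thesis .
  qed
  have mixAC: "\<rho>AC $$ (i,j) = (\<Sum>t<K. complex_of_real (p t) * kron (RA t) (RC t) $$ (i,j))" if i: "i < dA * dC" and j: "j < dA * dC" for i j
  proof -
    have "\<rho>AC $$ (i,j) = (\<Sum>t<K. complex_of_real (p t) * ptrace_mid dA dB dC (kron (kron (RA t) (RB t)) (RC t)) $$ (i,j))"
      unfolding \<rho>AC_def by (rule ptrace_mix, rule mix', insert i j, simp_all add: mult.assoc)
    also have "\<dots> = (\<Sum>t<K. complex_of_real (p t) * kron (RA t) (RC t) $$ (i,j))"
    proof (rule sum.cong, simp)
      fix t assume "t \<in> {..<K}" hence t: "t < K" by simp
      show "complex_of_real (p t) * ptrace_mid dA dB dC (kron (kron (RA t) (RB t)) (RC t)) $$ (i,j) = complex_of_real (p t) * kron (RA t) (RC t) $$ (i,j)"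
        using ptrace_mid_kron3[OF cA[OF t] cB[OF t] cC[OF t] i j] tB[OF t] by simp
    qed
    finally show ?thesis .
  qed
  have mixAB: "\<rho>AB $$ (i,j) = (\<Sum>t<K. complex_of_real (p t) * kron (RA t) (RB t) $$ (i,j))" if i: "i < dA * dB" and j: "j < dA * dB" for i j
  proof -
    have "\<rho>AB $$ (i,j) = (\<Sum>t<K. complex_of_real (p t) * ptrace_mid (dA * dB) dC 1 (kron (kron (RA t) (RB t)) (RC t)) $$ (i,j))"
      unfolding \<rho>AB_def ptrace_second_def by (rule ptrace_mix, rule mix', insert i j, simp_all add: mult.assoc)
    also have "\<dots> = (\<Sum>t<K. complex_of_real (p t) * kron (RA t) (RB t) $$ (i,j))"
    proof (rule sum.cong, simp)
      fix t assume "t \<in> {..<K}" hence t: "t < K" by simp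
      show "complex_of_real (p t) * ptrace_mid (dA * dB) dC 1 (kron (kron (RA t) (RB t)) (RC t)) $$ (i,j) = complex_of_real (p t) * kron (RA t) (RB t) $$ (i,j)"
        using ptrace_second_kron[OF cAB[OF t] cC[OF t] i j] tC[OF t] unfolding ptrace_second_def by simp
    qed
    finally show ?thesis .
  qed
  have mixC: "\<rho>C $$ (i,j) = (\<Sum>t<K. complex_of_real (p t) * RC t $$ (i,j))" if i: "i < dC" and j: "j < dC" for i j
  proof -
    have "\<rho>C $$ (i,j) = (\<Sum>t<K. complex_of_real (p t) * ptrace_mid 1 (dA * dB) dC (kron (kron (RA t) (RB t)) (RC t)) $$ (i,j))"
      unfolding \<rho>C_def ptrace_first_def by (rule ptrace_mix, rule mix', insert i j, simp_all add: mult.assoc)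
    also have "\<dots> = (\<Sum>t<K. complex_of_real (p t) * RC t $$ (i,j))"
    proof (rule sum.cong, simp)
      fix t assume "t \<in> {..<K}" hence t: "t < K" by simp
      show "complex_of_real (p t) * ptrace_mid 1 (dA * dB) dC (kron (kron (RA t) (RB t)) (RC t)) $$ (i,j) = complex_of_real (p t) * RC t $$ (i,j)"
        using ptrace_first_kron[OF cAB[OF t] cC[OF t] i j] trace_kron[OF cA[OF t] cB[OF t]] tA[OF t] tB[OF t]
        unfolding ptrace_first_def by simp
    qed
    finally show ?thesis .
  qed
  have mixB: "\<rho>B $$ (i,j) = (\<Sum>t<K. complex_of_real (p t) * RB t $$ (i,j))" if i: "i < dB" and j: "j < dB" for i j
  proof -
    have "\<rho>B $$ (i,j) = (\<Sum>t<K. complex_of_real (p t) * ptrace_mid 1 dA dB (kron (RA t) (RB t)) $$ (i,j))"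
      unfolding \<rho>B_def \<rho>AB_def[symmetric] ptrace_first_def by (rule ptrace_mix, rule mixAB, insert i j, simp_all)
    also have "\<dots> = (\<Sum>t<K. complex_of_real (p t) * RB t $$ (i,j))"
    proof (rule sum.cong, simp)
      fix t assume "t \<in> {..<K}" hence t: "t < K" by simp
      show "complex_of_real (p t) * ptrace_mid 1 dA dB (kron (RA t) (RB t)) $$ (i,j) = complex_of_real (p t) * RB t $$ (i,j)"
        using ptrace_first_kron[OF cA[OF t] cB[OF t] i j] tA[OF t] unfolding ptrace_first_def by simp
    qed
    finally show ?thesis .
  qed
  have EAc: "\<And>a k. a < NA \<Longrightarrow> k < MA \<Longrightarrow> EA a k \<in> carrier_mat dA dA" using povm_carrier[OF povmA] by blast
  have EBc: "\<And>a k. a < NB \<Longrightarrow> k < MB \<Longrightarrow> EB a k \<in> carrier_mat dB dB" using povm_carrier[OF povmB] by blast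
  have ECc: "\<And>a k. a < NC \<Longrightarrow> k < MC \<Longrightarrow> EC a k \<in> carrier_mat dC dC" using povm_carrier[OF povmC] by blast
  have pp: "\<And>t. t < K \<Longrightarrow> p t \<ge> 0" using p by blast
  have cRA: "\<rho>A \<in> carrier_mat dA dA" unfolding \<rho>A_def ptrace_second_def carrier_mat_def by simp
  have cRB: "\<rho>B \<in> carrier_mat dB dB" unfolding \<rho>B_def ptrace_first_def carrier_mat_def by simp
  have cRC: "\<rho>C \<in> carrier_mat dC dC" unfolding \<rho>C_def ptrace_first_def carrier_mat_def by simp
  have cRBC: "\<rho>BC \<in> carrier_mat (dB * dC) (dB * dC)" unfolding \<rho>BC_def ptrace_first_def carrier_mat_def by simp
  have cRAC: "\<rho>AC \<in> carrier_mat (dA * dC) (dA * dC)" unfolding \<rho>AC_def carrier_mat_def by simp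
  have cRAB: "\<rho>AB \<in> carrier_mat (dA * dB) (dA * dB)" unfolding \<rho>AB_def ptrace_second_def carrier_mat_def by simp
  have c1: "trace_norm (script_M l \<mu> \<nu> (tau_vec NA MA EA \<rho>A) (sigma_vec NB MB EB NC MC EC \<rho>BC)
            (P_A_BC NA MA EA NB MB EB NC MC EC \<rho>)) \<le> sqrt ((real l * \<mu>\<^sup>2 + KA) * (real l * \<nu>\<^sup>2 + KB * KC))"
    unfolding KA_def KB_def KC_def
  proof (rule script_M_bound[where K = K and p = p and ta = "\<lambda>t r. tv MA EA (RA t) r"
        and sb = "\<lambda>t c. sv MB EB (RB t) NC MC EC (RC t) c"])
    show "dim_vec (tau_vec NA MA EA \<rho>A) = NA * MA" by (simp add: tau_vec_def)
    show "dim_vec (sigma_vec NB MB EB NC MC EC \<rho>BC) = NB * MB * NC * MC" by (simp add: sigma_vec_def)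
    show "P_A_BC NA MA EA NB MB EB NC MC EC \<rho> \<in> carrier_mat (NA * MA) (NB * MB * NC * MC)"
      unfolding P_A_BC_def by (rule corr_carrier)
    show "\<And>t. t < K \<Longrightarrow> p t \<ge> 0" by (rule pp)
    show "(\<Sum>t<K. p t) = 1" by (rule p1)
    show "\<And>r. r < NA * MA \<Longrightarrow> tau_vec NA MA EA \<rho>A $ r = (\<Sum>t<K. complex_of_real (p t) * tv MA EA (RA t) r)"
      by (rule tau_entry[OF EAc cRA cA mixA])
    show "\<And>c. c < NB * MB * NC * MC \<Longrightarrow> sigma_vec NB MB EB NC MC EC \<rho>BC $ c = (\<Sum>t<K. complex_of_real (p t) * sv MB EB (RB t) NC MC EC (RC t) c)"
      by (rule sigma_entry[OF EBc ECc cRBC cB cC mixBC])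
    show "\<And>t. t < K \<Longrightarrow> (\<Sum>r<NA * MA. (cmod (tv MA EA (RA t) r))^2) \<le> K_const dA MA xA"
      by (rule norm_tv[OF povmA dA'])
    show "\<And>t. t < K \<Longrightarrow> (\<Sum>c<NB * MB * NC * MC. (cmod (sv MB EB (RB t) NC MC EC (RC t) c))^2) \<le> K_const dB MB xB * K_const dC MC xC"
      by (rule norm_sv[OF povmB dB' povmC dC'])
    fix r c assume r: "r < NA * MA" and c: "c < NB * MB * NC * MC"
    note cb = idx_bounds4[OF c]
    show "P_A_BC NA MA EA NB MB EB NC MC EC \<rho> $$ (r,c) = (\<Sum>t<K. complex_of_real (p t) * (tv MA EA (RA t) r * sv MB EB (RB t) NC MC EC (RC t) c))"
      unfolding P_A_BC_def corr_entry[OF r c]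
      apply (subst prob3_entry[where EA=EA and EB=EB and EC=EC and \<alpha>="r div MA" and k="r mod MA"
         and \<beta>="c div (MB * NC * MC)" and j="(c div (NC * MC)) mod MB" and \<gamma>="(c div MC) mod NC" and n="c mod MC",
         OF EAc[OF div_lt[OF r] mod_lt[OF r]] EBc[OF cb(1,2)] ECc[OF cb(3,4)] rc cA cB cC mix'])
      unfolding tv_def sv_def by (simp_all add: mult.assoc)
  qed
  have c2: "trace_norm (script_M l \<mu> \<nu> (tau_vec NB MB EB \<rho>B) (sigma_vec NA MA EA NC MC EC \<rho>AC)
            (P_B_AC NA MA EA NB MB EB NC MC EC \<rho>)) \<le> sqrt ((real l * \<mu>\<^sup>2 + KB) * (real l * \<nu>\<^sup>2 + KA * KC))"
    unfolding KA_def KB_def KC_def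
  proof (rule script_M_bound[where K = K and p = p and ta = "\<lambda>t r. tv MB EB (RB t) r"
        and sb = "\<lambda>t c. sv MA EA (RA t) NC MC EC (RC t) c"])
    show "dim_vec (tau_vec NB MB EB \<rho>B) = NB * MB" by (simp add: tau_vec_def)
    show "dim_vec (sigma_vec NA MA EA NC MC EC \<rho>AC) = NA * MA * NC * MC" by (simp add: sigma_vec_def)
    show "P_B_AC NA MA EA NB MB EB NC MC EC \<rho> \<in> carrier_mat (NB * MB) (NA * MA * NC * MC)"
      unfolding P_B_AC_def by (rule corr_carrier)
    show "\<And>t. t < K \<Longrightarrow> p t \<ge> 0" by (rule pp)
    show "(\<Sum>t<K. p t) = 1" by (rule p1)
    show "\<And>r. r < NB * MB \<Longrightarrow> tau_vec NB MB EB \<rho>B $ r = (\<Sum>t<K. complex_of_real (p t) * tv MB EB (RB t) r)"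
      by (rule tau_entry[OF EBc cRB cB mixB])
    show "\<And>c. c < NA * MA * NC * MC \<Longrightarrow> sigma_vec NA MA EA NC MC EC \<rho>AC $ c = (\<Sum>t<K. complex_of_real (p t) * sv MA EA (RA t) NC MC EC (RC t) c)"
      by (rule sigma_entry[OF EAc ECc cRAC cA cC mixAC])
    show "\<And>t. t < K \<Longrightarrow> (\<Sum>r<NB * MB. (cmod (tv MB EB (RB t) r))^2) \<le> K_const dB MB xB"
      by (rule norm_tv[OF povmB dB'])
    show "\<And>t. t < K \<Longrightarrow> (\<Sum>c<NA * MA * NC * MC. (cmod (sv MA EA (RA t) NC MC EC (RC t) c))^2) \<le> K_const dA MA xA * K_const dC MC xC"
      by (rule norm_sv[OF povmA dA' povmC dC'])
    fix r c assume r: "r < NB * MB" and c: "c < NA * MA * NC * MC"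
    note cb = idx_bounds4[OF c]
    show "P_B_AC NA MA EA NB MB EB NC MC EC \<rho> $$ (r,c) = (\<Sum>t<K. complex_of_real (p t) * (tv MB EB (RB t) r * sv MA EA (RA t) NC MC EC (RC t) c))"
      unfolding P_B_AC_def corr_entry[OF r c]
      apply (subst prob3_entry[where EA=EA and EB=EB and EC=EC and \<beta>="r div MB" and j="r mod MB"
         and \<alpha>="c div (MA * NC * MC)" and k="(c div (NC * MC)) mod MA" and \<gamma>="(c div MC) mod NC" and n="c mod MC",
         OF EAc[OF cb(1,2)] EBc[OF div_lt[OF r] mod_lt[OF r]] ECc[OF cb(3,4)] rc cA cB cC mix'])
      unfolding tv_def sv_def by (simp_all add: mult_ac)
  qed
  have c3: "trace_norm (script_M l \<mu> \<nu> (tau_vec NC MC EC \<rho>C) (sigma_vec NA MA EA NB MB EB \<rho>AB)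
            (P_C_AB NA MA EA NB MB EB NC MC EC \<rho>)) \<le> sqrt ((real l * \<mu>\<^sup>2 + KC) * (real l * \<nu>\<^sup>2 + KA * KB))"
    unfolding KA_def KB_def KC_def
  proof (rule script_M_bound[where K = K and p = p and ta = "\<lambda>t r. tv MC EC (RC t) r"
        and sb = "\<lambda>t c. sv MA EA (RA t) NB MB EB (RB t) c"])
    show "dim_vec (tau_vec NC MC EC \<rho>C) = NC * MC" by (simp add: tau_vec_def)
    show "dim_vec (sigma_vec NA MA EA NB MB EB \<rho>AB) = NA * MA * NB * MB" by (simp add: sigma_vec_def)
    show "P_C_AB NA MA EA NB MB EB NC MC EC \<rho> \<in> carrier_mat (NC * MC) (NA * MA * NB * MB)"
      unfolding P_C_AB_def by (rule corr_carrier)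
    show "\<And>t. t < K \<Longrightarrow> p t \<ge> 0" by (rule pp)
    show "(\<Sum>t<K. p t) = 1" by (rule p1)
    show "\<And>r. r < NC * MC \<Longrightarrow> tau_vec NC MC EC \<rho>C $ r = (\<Sum>t<K. complex_of_real (p t) * tv MC EC (RC t) r)"
      by (rule tau_entry[OF ECc cRC cC mixC])
    show "\<And>c. c < NA * MA * NB * MB \<Longrightarrow> sigma_vec NA MA EA NB MB EB \<rho>AB $ c = (\<Sum>t<K. complex_of_real (p t) * sv MA EA (RA t) NB MB EB (RB t) c)"
      by (rule sigma_entry[OF EAc EBc cRAB cA cB mixAB])
    show "\<And>t. t < K \<Longrightarrow> (\<Sum>r<NC * MC. (cmod (tv MC EC (RC t) r))^2) \<le> K_const dC MC xC"
      by (rule norm_tv[OF povmC dC'])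
    show "\<And>t. t < K \<Longrightarrow> (\<Sum>c<NA * MA * NB * MB. (cmod (sv MA EA (RA t) NB MB EB (RB t) c))^2) \<le> K_const dA MA xA * K_const dB MB xB"
      by (rule norm_sv[OF povmA dA' povmB dB'])
    fix r c assume r: "r < NC * MC" and c: "c < NA * MA * NB * MB"
    note cb = idx_bounds4[OF c]
    show "P_C_AB NA MA EA NB MB EB NC MC EC \<rho> $$ (r,c) = (\<Sum>t<K. complex_of_real (p t) * (tv MC EC (RC t) r * sv MA EA (RA t) NB MB EB (RB t) c))"
      unfolding P_C_AB_def corr_entry[OF r c]
      apply (subst prob3_entry[where EA=EA and EB=EB and EC=EC and \<gamma>="r div MC" and n="r mod MC"
         and \<alpha>="c div (MA * NB * MB)" and k="(c div (NB * MB)) mod MA" and \<beta>="(c div MB) mod NB" and j="c mod MB",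
         OF EAc[OF cb(1,2)] EBc[OF cb(3,4)] ECc[OF div_lt[OF r] mod_lt[OF r]] rc cA cB cC mix'])
      unfolding tv_def sv_def by (simp_all add: mult_ac)
  qed
  show ?thesis using c1 c2 c3 by blast
qed


end
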